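(* Let $d\ge3$. There is no $n\in\mathbb{N}$ such that $\Phi^n$ is a mixed unitary channel for every unital quantum channel $\Phi:M_d\to M_d$.
   Context: A unital quantum channel on $M_d$ is a completely positive, unital, trace-preserving linear map. It is mixed unitary if it equals $\sum_{j=1}^\ell\lambda_j\mathrm{Ad}_{U_j}$ with unitaries $U_j\in M_d$, $\lambda_j\ge0$, $\sum_j\lambda_j=1$, where $\mathrm{Ad}_U(X)=U^*XU$. *)

theory Defs
  imports Complex_Main "Jordan_Normal_Form.Matrix"
begin

text \<open>Matrices in M_d are represented as complex d x d matrices (carrier_mat d d);
  a map on M_d is a function on complex matrices, only its behaviour on carrier_mat d d matters.\<close>

definition cadj :: "complex mat \<Rightarrow> complex mat" where
  "cadj A = mat (dim_col A) (dim_row A) (\<lambda>(i,j). cnj (A $$ (j,i)))"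

definition mtrace :: "complex mat \<Rightarrow> complex" where
  "mtrace A = (\<Sum>i<dim_row A. A $$ (i,i))"

definition unitary_mat :: "nat \<Rightarrow> complex mat \<Rightarrow> bool" where
  "unitary_mat d U \<longleftrightarrow> U \<in> carrier_mat d d \<and> cadj U * U = 1\<^sub>m d \<and> U * cadj U = 1\<^sub>m d"

definition psd :: "nat \<Rightarrow> complex mat \<Rightarrow> bool" where
  "psd n A \<longleftrightarrow> A \<in> carrier_mat n n \<and>
     (\<forall>x \<in> carrier_vec n. let q = map_vec cnj x \<bullet> (A *\<^sub>v x) in Im q = 0 \<and> Re q \<ge> 0)"

definition lin_map :: "nat \<Rightarrow> (complex mat \<Rightarrow> complex mat) \<Rightarrow> bool" where
  "lin_map d \<Phi> \<longleftrightarrow> (\<forall>X \<in> carrier_mat d d. \<Phi> X \<in> carrier_mat d d) \<and>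
     (\<forall>X \<in> carrier_mat d d. \<forall>Y \<in> carrier_mat d d. \<Phi> (X + Y) = \<Phi> X + \<Phi> Y) \<and>
     (\<forall>c. \<forall>X \<in> carrier_mat d d. \<Phi> (c \<cdot>\<^sub>m X) = c \<cdot>\<^sub>m \<Phi> X)"

text \<open>id_k \<otimes> \<Phi> acting on M_k(M_d) = M_{kd}: apply \<Phi> to each d x d block.\<close>
definition ampl :: "nat \<Rightarrow> nat \<Rightarrow> (complex mat \<Rightarrow> complex mat) \<Rightarrow> complex mat \<Rightarrow> complex mat" where
  "ampl k d \<Phi> X = mat (k*d) (k*d) (\<lambda>(r,c).
      \<Phi> (mat d d (\<lambda>(a,b). X $$ ((r div d) * d + a, (c div d) * d + b))) $$ (r mod d, c mod d))"

definition positive_map :: "nat \<Rightarrow> (complex mat \<Rightarrow> complex mat) \<Rightarrow> bool" where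
  "positive_map d \<Phi> \<longleftrightarrow> (\<forall>X. psd d X \<longrightarrow> psd d (\<Phi> X))"

definition completely_positive :: "nat \<Rightarrow> (complex mat \<Rightarrow> complex mat) \<Rightarrow> bool" where
  "completely_positive d \<Phi> \<longleftrightarrow> (\<forall>k\<ge>1. \<forall>X. psd (k*d) X \<longrightarrow> psd (k*d) (ampl k d \<Phi> X))"

definition unital_channel :: "nat \<Rightarrow> (complex mat \<Rightarrow> complex mat) \<Rightarrow> bool" where
  "unital_channel d \<Phi> \<longleftrightarrow> lin_map d \<Phi> \<and> completely_positive d \<Phi> \<and>
     \<Phi> (1\<^sub>m d) = 1\<^sub>m d \<and> (\<forall>X \<in> carrier_mat d d. mtrace (\<Phi> X) = mtrace X)"

definition mixed_unitary :: "nat \<Rightarrow> (complex mat \<Rightarrow> complex mat) \<Rightarrow> bool" where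
  "mixed_unitary d \<Phi> \<longleftrightarrow> (\<exists>l::nat. \<exists>lam::nat \<Rightarrow> real. \<exists>U::nat \<Rightarrow> complex mat.
     (\<forall>j<l. lam j \<ge> 0 \<and> unitary_mat d (U j)) \<and> (\<Sum>j<l. lam j) = 1 \<and>
     (\<forall>X \<in> carrier_mat d d.
        \<Phi> X = mat d d (\<lambda>(a,b). \<Sum>j<l. complex_of_real (lam j) * (cadj (U j) * X * U j) $$ (a,b))))"

end

theory Submission
  imports Defs
begin


lemma mult_entry:
  assumes "A \<in> carrier_mat n k" "B \<in> carrier_mat k m" "i < n" "j < m"
  shows "(A * B) $$ (i,j) = (\<Sum>l<k. A $$ (i,l) * B $$ (l,j))"
  using assms by (auto simp: scalar_prod_def lessThan_atLeast0 intro!: sum.cong)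

lemma cadj_carrier[simp]: "A \<in> carrier_mat n m \<Longrightarrow> cadj A \<in> carrier_mat m n"
  by (auto simp: cadj_def)

lemma cadj_dims[simp]: "dim_row (cadj A) = dim_col A" "dim_col (cadj A) = dim_row A"
  by (auto simp: cadj_def)

lemma cadj_index[simp]: "i < dim_col A \<Longrightarrow> j < dim_row A \<Longrightarrow> cadj A $$ (i,j) = cnj (A $$ (j,i))"
  by (auto simp: cadj_def)

lemma cadj_one[simp]: "cadj (1\<^sub>m d) = 1\<^sub>m d"
  by (rule eq_matI) (auto simp: cadj_def)

lemma cadj_one_right[simp]: "M \<in> carrier_mat d d \<Longrightarrow> cadj M * 1\<^sub>m d = cadj M"
  by (metis cadj_carrier right_mult_one_mat)

lemma cadj_mult:
  assumes "A \<in> carrier_mat n k" "B \<in> carrier_mat k m"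
  shows "cadj (A * B) = cadj B * cadj A"
proof (rule eq_matI)
  fix i j assume ij: "i < dim_row (cadj B * cadj A)" "j < dim_col (cadj B * cadj A)"
  then have i: "i < m" and j: "j < n" using assms by auto
  have "cadj (A * B) $$ (i,j) = cnj ((A*B) $$ (j,i))" using assms i j by simp
  also have "\<dots> = (\<Sum>l<k. cnj (A $$ (j,l)) * cnj (B $$ (l,i)))"
    using mult_entry[OF assms j i] by (simp add: cnj_sum)
  also have "\<dots> = (cadj B * cadj A) $$ (i,j)"
    using assms i j by (subst mult_entry[of _ m k _ n]) (auto simp: mult.commute intro!: sum.cong)
  finally show "cadj (A * B) $$ (i,j) = (cadj B * cadj A) $$ (i,j)" .
qed (use assms in auto)

lemma sand_entry:
  assumes M: "M \<in> carrier_mat d d" and X: "X \<in> carrier_mat d d" and ab: "a < d" "b < d"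
  shows "(cadj M * X * M) $$ (a,b) = (\<Sum>p<d. \<Sum>q<d. cnj (M $$ (p,a)) * X $$ (p,q) * M $$ (q,b))"
proof -
  have c1: "cadj M * X \<in> carrier_mat d d" using M X by auto
  have "(cadj M * X * M) $$ (a,b) = (\<Sum>q<d. (cadj M * X) $$ (a,q) * M $$ (q,b))"
    by (rule mult_entry[OF c1 M ab])
  also have "\<dots> = (\<Sum>q<d. (\<Sum>p<d. cnj (M $$ (p,a)) * X $$ (p,q)) * M $$ (q,b))"
    using M X ab by (intro sum.cong refl, subst mult_entry[of _ d d _ d]) auto
  also have "\<dots> = (\<Sum>q<d. \<Sum>p<d. cnj (M $$ (p,a)) * X $$ (p,q) * M $$ (q,b))"
    by (simp add: sum_distrib_right)
  also have "\<dots> = (\<Sum>p<d. \<Sum>q<d. cnj (M $$ (p,a)) * X $$ (p,q) * M $$ (q,b))"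
    by (rule sum.swap)
  finally show ?thesis .
qed

lemma sum_swap4:
  "(\<Sum>r\<in>A. \<Sum>c\<in>B. \<Sum>p\<in>C. \<Sum>q\<in>D. F r c p q) = (\<Sum>p\<in>C. \<Sum>q\<in>D. \<Sum>r\<in>A. \<Sum>c\<in>B. F r c p q)"
proof -
  have "(\<Sum>r\<in>A. \<Sum>c\<in>B. \<Sum>p\<in>C. \<Sum>q\<in>D. F r c p q) = (\<Sum>r\<in>A. \<Sum>p\<in>C. \<Sum>c\<in>B. \<Sum>q\<in>D. F r c p q)"
    by (rule sum.cong[OF refl], rule sum.swap)
  also have "\<dots> = (\<Sum>r\<in>A. \<Sum>p\<in>C. \<Sum>q\<in>D. \<Sum>c\<in>B. F r c p q)"
    by (rule sum.cong[OF refl], rule sum.cong[OF refl], rule sum.swap)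
  also have "\<dots> = (\<Sum>p\<in>C. \<Sum>r\<in>A. \<Sum>q\<in>D. \<Sum>c\<in>B. F r c p q)" by (rule sum.swap)
  also have "\<dots> = (\<Sum>p\<in>C. \<Sum>q\<in>D. \<Sum>r\<in>A. \<Sum>c\<in>B. F r c p q)"
    by (rule sum.cong[OF refl], rule sum.swap)
  finally show ?thesis .
qed

definition wk :: "nat \<Rightarrow> nat \<Rightarrow> (nat \<Rightarrow> real) \<Rightarrow> (nat \<Rightarrow> complex mat) \<Rightarrow> complex mat \<Rightarrow> complex mat" where
  "wk d m c M X = mat d d (\<lambda>(a,b). \<Sum>j<m. complex_of_real (c j) * (cadj (M j) * X * M j) $$ (a,b))"

lemma wk_dims[simp]: "dim_row (wk d m c M X) = d" "dim_col (wk d m c M X) = d"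
  by (auto simp: wk_def)

lemma wk_entry:
  assumes "\<And>j. j < m \<Longrightarrow> M j \<in> carrier_mat d d" "X \<in> carrier_mat d d" "a < d" "b < d"
  shows "wk d m c M X $$ (a,b) = (\<Sum>j<m. complex_of_real (c j) * (\<Sum>p<d. \<Sum>q<d. cnj (M j $$ (p,a)) * X $$ (p,q) * M j $$ (q,b)))"
  using assms by (simp add: wk_def) (intro sum.cong refl arg_cong2[where f="(*)"]; subst sand_entry; auto)

definition qf :: "nat \<Rightarrow> complex mat \<Rightarrow> (nat \<Rightarrow> complex) \<Rightarrow> complex" where
  "qf n A x = (\<Sum>i<n. \<Sum>j<n. cnj (x i) * A $$ (i,j) * x j)"

lemma quad_qf:
  assumes "A \<in> carrier_mat n n" "x \<in> carrier_vec n"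
  shows "map_vec cnj x \<bullet> (A *\<^sub>v x) = qf n A (\<lambda>i. x $ i)"
  using assms unfolding qf_def
  by (auto simp: scalar_prod_def lessThan_atLeast0 sum_distrib_left mult.assoc intro!: sum.cong)

lemma psd_iff:
  "psd n A \<longleftrightarrow> A \<in> carrier_mat n n \<and> (\<forall>x. Im (qf n A x) = 0 \<and> Re (qf n A x) \<ge> 0)"
proof
  assume p: "psd n A"
  then have A: "A \<in> carrier_mat n n" by (simp add: psd_def)
  show "A \<in> carrier_mat n n \<and> (\<forall>x. Im (qf n A x) = 0 \<and> Re (qf n A x) \<ge> 0)"
  proof (intro conjI allI A)
    fix x :: "nat \<Rightarrow> complex"
    have v: "vec n x \<in> carrier_vec n" by simp
    have e: "qf n A (\<lambda>i. vec n x $ i) = qf n A x" unfolding qf_def by (auto intro!: sum.cong)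
    from p v have "Im (map_vec cnj (vec n x) \<bullet> (A *\<^sub>v vec n x)) = 0 \<and> Re (map_vec cnj (vec n x) \<bullet> (A *\<^sub>v vec n x)) \<ge> 0"
      unfolding psd_def Let_def by blast
    then show "Im (qf n A x) = 0" "Re (qf n A x) \<ge> 0" using quad_qf[OF A v] e by auto
  qed
next
  assume h: "A \<in> carrier_mat n n \<and> (\<forall>x. Im (qf n A x) = 0 \<and> Re (qf n A x) \<ge> 0)"
  then show "psd n A" unfolding psd_def Let_def using quad_qf by auto
qed

lemma psd_conj:
  assumes X: "psd n X" and N: "N \<in> carrier_mat n n"
  shows "psd n (cadj N * X * N)"
proof -
  have Xc: "X \<in> carrier_mat n n" using X by (simp add: psd_def)
  have key: "qf n (cadj N * X * N) x = qf n X (\<lambda>p. \<Sum>r<n. N $$ (p,r) * x r)" for x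
  proof -
    have "qf n (cadj N * X * N) x = (\<Sum>r<n. \<Sum>c<n. cnj (x r) * (\<Sum>p<n. \<Sum>q<n. cnj (N $$ (p,r)) * X $$ (p,q) * N $$ (q,c)) * x c)"
      unfolding qf_def using N Xc by (intro sum.cong refl) (subst sand_entry[OF N Xc]; auto)
    also have "\<dots> = (\<Sum>r<n. \<Sum>c<n. \<Sum>p<n. \<Sum>q<n. cnj (N $$ (p,r) * x r) * X $$ (p,q) * (N $$ (q,c) * x c))"
      by (simp add: sum_distrib_left sum_distrib_right mult_ac)
    also have "\<dots> = (\<Sum>p<n. \<Sum>q<n. \<Sum>r<n. \<Sum>c<n. cnj (N $$ (p,r) * x r) * X $$ (p,q) * (N $$ (q,c) * x c))"
      by (rule sum_swap4)
    also have "\<dots> = qf n X (\<lambda>p. \<Sum>r<n. N $$ (p,r) * x r)"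
      unfolding qf_def by (simp add: cnj_sum sum_distrib_left sum_distrib_right mult_ac)
    finally show ?thesis .
  qed
  show ?thesis using X N Xc unfolding psd_iff key by auto
qed

lemma psd_wsum:
  assumes "\<And>j. j < m \<Longrightarrow> psd n (A j)" "\<And>j. j < m \<Longrightarrow> c j \<ge> 0"
  shows "psd n (mat n n (\<lambda>(a,b). \<Sum>j<m. complex_of_real (c j) * A j $$ (a,b)))"
proof -
  have e: "qf n (mat n n (\<lambda>(a,b). \<Sum>j<m. complex_of_real (c j) * A j $$ (a,b))) x
        = (\<Sum>j<m. complex_of_real (c j) * qf n (A j) x)" for x
  proof -
    have "qf n (mat n n (\<lambda>(a,b). \<Sum>j<m. complex_of_real (c j) * A j $$ (a,b))) x
       = (\<Sum>i<n. \<Sum>k<n. \<Sum>j<m. complex_of_real (c j) * (cnj (x i) * A j $$ (i,k) * x k))"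
      unfolding qf_def by (simp add: sum_distrib_left sum_distrib_right mult_ac)
    also have "\<dots> = (\<Sum>j<m. \<Sum>i<n. \<Sum>k<n. complex_of_real (c j) * (cnj (x i) * A j $$ (i,k) * x k))"
      by (subst sum.swap, rule sum.cong[OF refl], rule sum.swap)
    also have "\<dots> = (\<Sum>j<m. complex_of_real (c j) * qf n (A j) x)"
      unfolding qf_def by (simp add: sum_distrib_left)
    finally show ?thesis .
  qed
  show ?thesis unfolding psd_iff e
  proof (intro conjI allI)
    fix x
    have "\<And>j. j < m \<Longrightarrow> Im (qf n (A j) x) = 0 \<and> Re (qf n (A j) x) \<ge> 0" using assms(1) psd_iff by blast
    then show "Im (\<Sum>j<m. complex_of_real (c j) * qf n (A j) x) = 0"
      "Re (\<Sum>j<m. complex_of_real (c j) * qf n (A j) x) \<ge> 0"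
      using assms(2) by (auto simp: Im_sum Re_sum intro!: sum_nonneg)
  qed simp
qed

definition bd :: "nat \<Rightarrow> nat \<Rightarrow> complex mat \<Rightarrow> complex mat" where
  "bd k d M = mat (k*d) (k*d) (\<lambda>(R,C). if R div d = C div d then M $$ (R mod d, C mod d) else 0)"

lemma bd_carrier[simp]: "bd k d M \<in> carrier_mat (k*d) (k*d)"
  by (simp add: bd_def)

lemma sum_block:
  fixes f :: "nat \<Rightarrow> 'a::comm_monoid_add"
  assumes u: "u < k"
  shows "(\<Sum>P<k*d. if P div d = u then f P else 0) = (\<Sum>p<d. f (u*d+p))"
proof (cases "d = 0")
  case True then show ?thesis by simp
next
  case False
  then have d: "d > 0" by simp
  have "(\<Sum>P<k*d. if P div d = u then f P else 0) = sum f {P \<in> {..<k*d}. P div d = u}"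
    using sum.inter_filter[of "{..<k*d}" f "\<lambda>P. P div d = u"] by simp
  also have "{P \<in> {..<k*d}. P div d = u} = (\<lambda>p. u*d+p) ` {..<d}"
  proof (intro subset_antisym subsetI)
    fix P assume "P \<in> {P \<in> {..<k*d}. P div d = u}"
    then have "P div d = u" by simp
    then have "P = u*d + P mod d" by (metis div_mult_mod_eq mult.commute)
    moreover have "P mod d < d" using d by simp
    ultimately show "P \<in> (\<lambda>p. u*d+p) ` {..<d}" by (metis image_eqI lessThan_iff)
  next
    fix P assume "P \<in> (\<lambda>p. u*d+p) ` {..<d}"
    then obtain p where p: "p < d" "P = u*d+p" by auto
    have "u*d + p < (u+1)*d" using p by simp
    also have "\<dots> \<le> k*d" using u by (intro mult_right_mono) auto
    finally have "P < k*d" using p by simp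
    moreover have "P div d = u" using p d by simp
    ultimately show "P \<in> {P \<in> {..<k*d}. P div d = u}" by simp
  qed
  also have "sum f \<dots> = (\<Sum>p<d. f (u*d+p))"
    by (subst sum.reindex) (auto simp: inj_on_def)
  finally show ?thesis .
qed

lemma sum_block2:
  fixes X :: "nat \<Rightarrow> nat \<Rightarrow> complex"
  assumes "u < k" "v < k"
  shows "(\<Sum>P<k*d. \<Sum>Q<k*d. (if P div d = u then a (P mod d) else 0) * X P Q * (if Q div d = v then b (Q mod d) else 0))
       = (\<Sum>p<d. \<Sum>q<d. a p * X (u*d+p) (v*d+q) * b q)"
proof (cases "d = 0")
  case True then show ?thesis by simp
next
  case False
  have "(\<Sum>P<k*d. \<Sum>Q<k*d. (if P div d = u then a (P mod d) else 0) * X P Q * (if Q div d = v then b (Q mod d) else 0))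
      = (\<Sum>P<k*d. if P div d = u then (\<Sum>Q<k*d. if Q div d = v then a (P mod d) * X P Q * b (Q mod d) else 0) else 0)"
  proof (intro sum.cong refl)
    fix P assume "P \<in> {..<k*d}"
    show "(\<Sum>Q<k*d. (if P div d = u then a (P mod d) else 0) * X P Q * (if Q div d = v then b (Q mod d) else 0))
      = (if P div d = u then (\<Sum>Q<k*d. if Q div d = v then a (P mod d) * X P Q * b (Q mod d) else 0) else 0)"
      by (cases "P div d = u") (auto intro!: sum.cong)
  qed
  also have "\<dots> = (\<Sum>P<k*d. if P div d = u then (\<Sum>q<d. a (P mod d) * X P (v*d+q) * b q) else 0)"
    using False by (intro sum.cong refl) (simp add: sum_block[OF assms(2)])
  also have "\<dots> = (\<Sum>p<d. \<Sum>q<d. a p * X (u*d+p) (v*d+q) * b q)"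
    using False by (simp add: sum_block[OF assms(1)])
  finally show ?thesis .
qed

lemma ampl_wk:
  assumes X: "X \<in> carrier_mat (k*d) (k*d)" and M: "\<And>j. j < m \<Longrightarrow> M j \<in> carrier_mat d d"
  shows "ampl k d (wk d m c M) X = wk (k*d) m c (\<lambda>j. bd k d (M j)) X"
proof (rule eq_matI)
  fix r s assume rs: "r < dim_row (wk (k*d) m c (\<lambda>j. bd k d (M j)) X)" "s < dim_col (wk (k*d) m c (\<lambda>j. bd k d (M j)) X)"
  then have r: "r < k*d" and s: "s < k*d" by (auto simp: wk_def)
  then have d: "d > 0" by (cases d) auto
  have ru: "r div d < k" using r by (simp add: less_mult_imp_div_less)
  have sv: "s div d < k" using s by (simp add: less_mult_imp_div_less)
  have rm: "r mod d < d" and sm: "s mod d < d" using d by auto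
  define B where "B = mat d d (\<lambda>(a,b). X $$ ((r div d) * d + a, (s div d) * d + b))"
  have Bc: "B \<in> carrier_mat d d" by (simp add: B_def)
  have "ampl k d (wk d m c M) X $$ (r,s) = wk d m c M B $$ (r mod d, s mod d)"
    using r s by (simp add: ampl_def B_def)
  also have "\<dots> = (\<Sum>j<m. complex_of_real (c j) * (\<Sum>p<d. \<Sum>q<d. cnj (M j $$ (p, r mod d)) * X $$ ((r div d)*d+p, (s div d)*d+q) * M j $$ (q, s mod d)))"
    using rm sm M Bc by (simp add: wk_entry B_def)
  also have "\<dots> = (\<Sum>j<m. complex_of_real (c j) * (cadj (bd k d (M j)) * X * bd k d (M j)) $$ (r,s))"
  proof (intro sum.cong refl arg_cong2[where f="(*)"])
    fix j assume j: "j \<in> {..<m}"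
    have "(cadj (bd k d (M j)) * X * bd k d (M j)) $$ (r,s)
      = (\<Sum>P<k*d. \<Sum>Q<k*d. cnj (bd k d (M j) $$ (P,r)) * X $$ (P,Q) * bd k d (M j) $$ (Q,s))"
      by (rule sand_entry[OF bd_carrier X r s])
    also have "\<dots> = (\<Sum>P<k*d. \<Sum>Q<k*d. (if P div d = r div d then cnj (M j $$ (P mod d, r mod d)) else 0) * X $$ (P,Q)
                    * (if Q div d = s div d then M j $$ (Q mod d, s mod d) else 0))"
      using r s by (intro sum.cong refl) (simp add: bd_def)
    also have "\<dots> = (\<Sum>p<d. \<Sum>q<d. cnj (M j $$ (p, r mod d)) * X $$ ((r div d)*d+p, (s div d)*d+q) * M j $$ (q, s mod d))"
      by (rule sum_block2[OF ru sv, where a="\<lambda>p. cnj (M j $$ (p, r mod d))" and b="\<lambda>q. M j $$ (q, s mod d)"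
            and X="\<lambda>P Q. X $$ (P,Q)"])
    finally show "(\<Sum>p<d. \<Sum>q<d. cnj (M j $$ (p, r mod d)) * X $$ ((r div d)*d+p, (s div d)*d+q) * M j $$ (q, s mod d))
       = (cadj (bd k d (M j)) * X * bd k d (M j)) $$ (r,s)" by simp
  qed
  also have "\<dots> = wk (k*d) m c (\<lambda>j. bd k d (M j)) X $$ (r,s)"
    using r s by (simp add: wk_def)
  finally show "ampl k d (wk d m c M) X $$ (r,s) = wk (k*d) m c (\<lambda>j. bd k d (M j)) X $$ (r,s)" .
qed (auto simp: ampl_def wk_def)

lemma wk_cp:
  assumes M: "\<And>j. j < m \<Longrightarrow> M j \<in> carrier_mat d d" and c: "\<And>j. j < m \<Longrightarrow> c j \<ge> 0"
  shows "completely_positive d (wk d m c M)"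
  unfolding completely_positive_def
proof (intro allI impI)
  fix k :: nat and X assume "k \<ge> 1" and X: "psd (k*d) X"
  have Xc: "X \<in> carrier_mat (k*d) (k*d)" using X by (simp add: psd_def)
  have "psd (k*d) (wk (k*d) m c (\<lambda>j. bd k d (M j)) X)"
    unfolding wk_def by (rule psd_wsum[OF psd_conj[OF X bd_carrier] c])
  then show "psd (k*d) (ampl k d (wk d m c M) X)"
    using ampl_wk[OF Xc M] by simp
qed

lemma wk_carrier[simp]: "wk d m c M X \<in> carrier_mat d d"
  by (simp add: wk_def)

lemma wk_lin:
  assumes M: "\<And>j. j < m \<Longrightarrow> M j \<in> carrier_mat d d"
  shows "lin_map d (wk d m c M)"
  unfolding lin_map_def
proof (intro conjI ballI allI)
  fix X Y :: "complex mat" assume X: "X \<in> carrier_mat d d" and Y: "Y \<in> carrier_mat d d"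
  show "wk d m c M (X + Y) = wk d m c M X + wk d m c M Y"
  proof (rule eq_matI)
    fix a b assume "a < dim_row (wk d m c M X + wk d m c M Y)" "b < dim_col (wk d m c M X + wk d m c M Y)"
    then have a: "a < d" and b: "b < d" by (auto simp: wk_def)
    have XY: "X + Y \<in> carrier_mat d d" using X Y by simp
    have "wk d m c M (X + Y) $$ (a,b) = (\<Sum>j<m. complex_of_real (c j) * (\<Sum>p<d. \<Sum>q<d. cnj (M j $$ (p,a)) * (X + Y) $$ (p,q) * M j $$ (q,b)))"
      using a b M XY by (simp add: wk_entry)
    also have "\<dots> = (\<Sum>j<m. complex_of_real (c j) * (\<Sum>p<d. \<Sum>q<d. cnj (M j $$ (p,a)) * X $$ (p,q) * M j $$ (q,b)))
                  + (\<Sum>j<m. complex_of_real (c j) * (\<Sum>p<d. \<Sum>q<d. cnj (M j $$ (p,a)) * Y $$ (p,q) * M j $$ (q,b)))"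
      using X Y by (simp add: ring_distribs sum.distrib)
    also have "\<dots> = (wk d m c M X + wk d m c M Y) $$ (a,b)"
      using a b M X Y by (simp add: wk_entry)
    finally show "wk d m c M (X + Y) $$ (a,b) = (wk d m c M X + wk d m c M Y) $$ (a,b)" .
  qed (auto simp: wk_def)
next
  fix z :: complex and X :: "complex mat" assume X: "X \<in> carrier_mat d d"
  show "wk d m c M (z \<cdot>\<^sub>m X) = z \<cdot>\<^sub>m wk d m c M X"
  proof (rule eq_matI)
    fix a b assume "a < dim_row (z \<cdot>\<^sub>m wk d m c M X)" "b < dim_col (z \<cdot>\<^sub>m wk d m c M X)"
    then have a: "a < d" and b: "b < d" by auto
    have zX: "z \<cdot>\<^sub>m X \<in> carrier_mat d d" using X by simp
    have "wk d m c M (z \<cdot>\<^sub>m X) $$ (a,b) = (\<Sum>j<m. complex_of_real (c j) * (\<Sum>p<d. \<Sum>q<d. cnj (M j $$ (p,a)) * (z \<cdot>\<^sub>m X) $$ (p,q) * M j $$ (q,b)))"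
      using a b M zX by (simp add: wk_entry)
    also have "\<dots> = z * (\<Sum>j<m. complex_of_real (c j) * (\<Sum>p<d. \<Sum>q<d. cnj (M j $$ (p,a)) * X $$ (p,q) * M j $$ (q,b)))"
      using X by (simp add: sum_distrib_left mult_ac)
    also have "\<dots> = (z \<cdot>\<^sub>m wk d m c M X) $$ (a,b)"
      using a b M X by (simp add: wk_entry)
    finally show "wk d m c M (z \<cdot>\<^sub>m X) $$ (a,b) = (z \<cdot>\<^sub>m wk d m c M X) $$ (a,b)" .
  qed auto
qed simp

lemma wk_unital:
  assumes M: "\<And>j. j < m \<Longrightarrow> M j \<in> carrier_mat d d"
    and U1: "\<And>a b. a < d \<Longrightarrow> b < d \<Longrightarrow> (\<Sum>j<m. complex_of_real (c j) * (cadj (M j) * M j) $$ (a,b)) = (if a = b then 1 else 0)"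
  shows "wk d m c M (1\<^sub>m d) = 1\<^sub>m d"
proof (rule eq_matI)
  fix a b assume "a < dim_row (1\<^sub>m d)" "b < dim_col (1\<^sub>m d)"
  then have a: "a < d" and b: "b < d" by auto
  have "wk d m c M (1\<^sub>m d) $$ (a,b) = (\<Sum>j<m. complex_of_real (c j) * (cadj (M j) * M j) $$ (a,b))"
    using a b M by (auto simp: wk_def intro!: sum.cong)
  then show "wk d m c M (1\<^sub>m d) $$ (a,b) = 1\<^sub>m d $$ (a,b)" using U1[OF a b] a b by simp
qed (auto simp: wk_def)

lemma wk_tp:
  assumes M: "\<And>j. j < m \<Longrightarrow> M j \<in> carrier_mat d d"
    and T1: "\<And>a b. a < d \<Longrightarrow> b < d \<Longrightarrow> (\<Sum>j<m. complex_of_real (c j) * (M j * cadj (M j)) $$ (a,b)) = (if a = b then 1 else 0)"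
    and X: "X \<in> carrier_mat d d"
  shows "mtrace (wk d m c M X) = mtrace X"
proof -
  have "mtrace (wk d m c M X) = (\<Sum>a<d. \<Sum>j<m. \<Sum>p<d. \<Sum>q<d. complex_of_real (c j) * (cnj (M j $$ (p,a)) * X $$ (p,q) * M j $$ (q,a)))"
    unfolding mtrace_def using M X by (simp add: wk_entry sum_distrib_left)
  also have "\<dots> = (\<Sum>p<d. \<Sum>q<d. \<Sum>a<d. \<Sum>j<m. complex_of_real (c j) * (cnj (M j $$ (p,a)) * X $$ (p,q) * M j $$ (q,a)))"
    by (rule sum_swap4)
  also have "\<dots> = (\<Sum>p<d. \<Sum>q<d. X $$ (p,q) * (\<Sum>j<m. complex_of_real (c j) * (M j * cadj (M j)) $$ (q,p)))"
  proof (intro sum.cong refl)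
    fix p q assume p: "p \<in> {..<d}" and q: "q \<in> {..<d}"
    have "(\<Sum>a<d. \<Sum>j<m. complex_of_real (c j) * (cnj (M j $$ (p,a)) * X $$ (p,q) * M j $$ (q,a)))
        = (\<Sum>j<m. \<Sum>a<d. complex_of_real (c j) * (cnj (M j $$ (p,a)) * X $$ (p,q) * M j $$ (q,a)))"
      by (rule sum.swap)
    also have "\<dots> = (\<Sum>j<m. X $$ (p,q) * (complex_of_real (c j) * (M j * cadj (M j)) $$ (q,p)))"
    proof (intro sum.cong refl)
      fix j assume j: "j \<in> {..<m}"
      have Mj: "M j \<in> carrier_mat d d" using M j by simp
      have "(M j * cadj (M j)) $$ (q,p) = (\<Sum>a<d. M j $$ (q,a) * cnj (M j $$ (p,a)))"
        using Mj p q by (subst mult_entry[of _ d d _ d]) auto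
      then show "(\<Sum>a<d. complex_of_real (c j) * (cnj (M j $$ (p,a)) * X $$ (p,q) * M j $$ (q,a)))
          = X $$ (p,q) * (complex_of_real (c j) * (M j * cadj (M j)) $$ (q,p))"
        by (simp add: sum_distrib_left mult_ac)
    qed
    also have "\<dots> = X $$ (p,q) * (\<Sum>j<m. complex_of_real (c j) * (M j * cadj (M j)) $$ (q,p))"
      by (simp add: sum_distrib_left)
    finally show "(\<Sum>a<d. \<Sum>j<m. complex_of_real (c j) * (cnj (M j $$ (p,a)) * X $$ (p,q) * M j $$ (q,a)))
        = X $$ (p,q) * (\<Sum>j<m. complex_of_real (c j) * (M j * cadj (M j)) $$ (q,p))" .
  qed
  also have "\<dots> = (\<Sum>p<d. \<Sum>q<d. X $$ (p,q) * (if q = p then 1 else 0))"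
    by (intro sum.cong refl) (simp add: T1)
  also have "\<dots> = mtrace X"
    unfolding mtrace_def using X by (simp add: if_distrib cong: if_cong)
  finally show ?thesis .
qed

lemma wk_unital_channel:
  assumes M: "\<And>j. j < m \<Longrightarrow> M j \<in> carrier_mat d d" and c: "\<And>j. j < m \<Longrightarrow> c j \<ge> 0"
    and U1: "\<And>a b. a < d \<Longrightarrow> b < d \<Longrightarrow> (\<Sum>j<m. complex_of_real (c j) * (cadj (M j) * M j) $$ (a,b)) = (if a = b then 1 else 0)"
    and T1: "\<And>a b. a < d \<Longrightarrow> b < d \<Longrightarrow> (\<Sum>j<m. complex_of_real (c j) * (M j * cadj (M j)) $$ (a,b)) = (if a = b then 1 else 0)"
  shows "unital_channel d (wk d m c M)"
  unfolding unital_channel_def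
proof (intro conjI ballI)
  show "lin_map d (wk d m c M)" by (rule wk_lin) (use M in auto)
  show "completely_positive d (wk d m c M)" by (rule wk_cp) (use M c in auto)
  show "wk d m c M (1\<^sub>m d) = 1\<^sub>m d" by (rule wk_unital) (use M U1 in auto)
  show "mtrace (wk d m c M X) = mtrace X" if "X \<in> carrier_mat d d" for X
    by (rule wk_tp) (use M T1 that in auto)
qed

lemma sum_divmod:
  fixes f :: "nat \<Rightarrow> 'a::comm_monoid_add"
  shows "(\<Sum>i<N*m. f i) = (\<Sum>u<N. \<Sum>s<m. f (u*m+s))"
proof -
  have "(\<Sum>i<N*m. f i) = (\<Sum>u<N. sum f {u*m..<u*m+m})"
    by (rule sum.nat_group[symmetric])
  also have "\<dots> = (\<Sum>u<N. \<Sum>s<m. f (u*m+s))"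
  proof (rule sum.cong[OF refl])
    fix u
    show "sum f {u*m..<u*m+m} = (\<Sum>s<m. f (u*m+s))"
      using sum.shift_bounds_nat_ivl[of f 0 "u*m" m] by (simp add: add.commute atLeast0LessThan)
  qed
  finally show ?thesis .
qed

primrec kw :: "nat \<Rightarrow> nat \<Rightarrow> (nat \<Rightarrow> complex mat) \<Rightarrow> nat \<Rightarrow> nat \<Rightarrow> complex mat" where
  "kw d m K 0 u = 1\<^sub>m d"
| "kw d m K (Suc n) u = kw d m K n (u div m) * K (u mod m)"

lemma kw_carrier:
  assumes "\<And>j. j < m \<Longrightarrow> K j \<in> carrier_mat d d" "m > 0"
  shows "kw d m K n u \<in> carrier_mat d d"
proof (induction n arbitrary: u)
  case (Suc n)
  have "u mod m < m" using assms(2) by simp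
  then show ?case using Suc assms(1) by (auto intro!: mult_carrier_mat)
qed simp

lemma sand_wk:
  assumes M: "M \<in> carrier_mat d d" and K: "\<And>j. j < N \<Longrightarrow> K j \<in> carrier_mat d d"
    and X: "X \<in> carrier_mat d d" and ab: "a < d" "b < d"
  shows "(cadj M * wk d N c K X * M) $$ (a,b) = (\<Sum>u<N. complex_of_real (c u) * (cadj M * (cadj (K u) * X * K u) * M) $$ (a,b))"
proof -
  have Z: "cadj (K u) * X * K u \<in> carrier_mat d d" if "u < N" for u using K[OF that] X by auto
  have "(cadj M * wk d N c K X * M) $$ (a,b) = (\<Sum>p<d. \<Sum>q<d. cnj (M $$ (p,a)) * wk d N c K X $$ (p,q) * M $$ (q,b))"
    by (rule sand_entry[OF M wk_carrier ab])
  also have "\<dots> = (\<Sum>p<d. \<Sum>q<d. \<Sum>u<N. complex_of_real (c u) * (cnj (M $$ (p,a)) * (cadj (K u) * X * K u) $$ (p,q) * M $$ (q,b)))"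
    by (intro sum.cong refl) (simp add: wk_def sum_distrib_left sum_distrib_right mult_ac)
  also have "\<dots> = (\<Sum>u<N. \<Sum>p<d. \<Sum>q<d. complex_of_real (c u) * (cnj (M $$ (p,a)) * (cadj (K u) * X * K u) $$ (p,q) * M $$ (q,b)))"
    by (subst sum.swap, rule sum.cong[OF refl], rule sum.swap)
  also have "\<dots> = (\<Sum>u<N. complex_of_real (c u) * (cadj M * (cadj (K u) * X * K u) * M) $$ (a,b))"
    by (intro sum.cong refl) (simp add: sand_entry[OF M Z ab] sum_distrib_left)
  finally show ?thesis .
qed

lemma sand_comp:
  assumes A: "A \<in> carrier_mat d d" and B: "B \<in> carrier_mat d d" and X: "X \<in> carrier_mat d d"
  shows "cadj (A * B) * X * (A * B) = cadj B * (cadj A * X * A) * B"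
proof -
  have cA: "cadj A \<in> carrier_mat d d" and cB: "cadj B \<in> carrier_mat d d" using A B by auto
  have Yc: "cadj B * cadj A * X \<in> carrier_mat d d" using cA cB X by simp
  have AX: "cadj A * X \<in> carrier_mat d d" using cA X by simp
  have e1: "cadj B * cadj A * X * (A * B) = cadj B * cadj A * X * A * B"
    by (rule assoc_mult_mat[OF Yc A B, symmetric])
  have e2: "cadj B * cadj A * X = cadj B * (cadj A * X)"
    by (rule assoc_mult_mat[OF cB cA X])
  have e3: "cadj B * (cadj A * X) * A = cadj B * (cadj A * X * A)"
    by (rule assoc_mult_mat[OF cB AX A])
  have "cadj (A * B) * X * (A * B) = cadj B * cadj A * X * (A * B)" using cadj_mult[OF A B] by simp
  also have "\<dots> = cadj B * cadj A * X * A * B" by (rule e1)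
  also have "\<dots> = cadj B * (cadj A * X) * A * B" by (subst e2, rule refl)
  also have "\<dots> = cadj B * (cadj A * X * A) * B" by (subst e3, rule refl)
  finally show ?thesis .
qed

primrec cw :: "nat \<Rightarrow> (nat \<Rightarrow> real) \<Rightarrow> nat \<Rightarrow> nat \<Rightarrow> real" where
  "cw m c 0 u = 1"
| "cw m c (Suc n) u = cw m c n (u div m) * c (u mod m)"

lemma wk_pow:
  assumes K: "\<And>j. j < m \<Longrightarrow> K j \<in> carrier_mat d d" and m: "m > 0" and X: "X \<in> carrier_mat d d"
  shows "(wk d m c K ^^ n) X = wk d (m^n) (cw m c n) (kw d m K n) X"
proof (induction n)
  case 0
  show ?case
  proof (rule eq_matI)
    fix a b assume "a < dim_row (wk d (m^0) (cw m c 0) (kw d m K 0) X)" "b < dim_col (wk d (m^0) (cw m c 0) (kw d m K 0) X)"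
    then have "a < d" "b < d" by auto
    then show "(wk d m c K ^^ 0) X $$ (a,b) = wk d (m^0) (cw m c 0) (kw d m K 0) X $$ (a,b)"
      using X by (simp add: wk_def)
  qed (use X in auto)
next
  case (Suc n)
  have KW: "\<And>u. kw d m K n u \<in> carrier_mat d d" by (rule kw_carrier[OF K m])
  show ?case
  proof (rule eq_matI)
    fix a b assume "a < dim_row (wk d (m^Suc n) (cw m c (Suc n)) (kw d m K (Suc n)) X)" "b < dim_col (wk d (m^Suc n) (cw m c (Suc n)) (kw d m K (Suc n)) X)"
    then have a: "a < d" and b: "b < d" by auto
    have "(wk d m c K ^^ Suc n) X $$ (a,b) = wk d m c K (wk d (m^n) (cw m c n) (kw d m K n) X) $$ (a,b)"
      using Suc by simp
    also have "\<dots> = (\<Sum>s<m. complex_of_real (c s) * (cadj (K s) * wk d (m^n) (cw m c n) (kw d m K n) X * K s) $$ (a,b))"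
      using a b by (simp add: wk_def)
    also have "\<dots> = (\<Sum>s<m. \<Sum>u<m^n. complex_of_real (cw m c n u * c s) * (cadj (kw d m K n u * K s) * X * (kw d m K n u * K s)) $$ (a,b))"
    proof (intro sum.cong refl)
      fix s assume s: "s \<in> {..<m}"
      have Ks: "K s \<in> carrier_mat d d" using K s by simp
      show "complex_of_real (c s) * (cadj (K s) * wk d (m^n) (cw m c n) (kw d m K n) X * K s) $$ (a,b)
          = (\<Sum>u<m^n. complex_of_real (cw m c n u * c s) * (cadj (kw d m K n u * K s) * X * (kw d m K n u * K s)) $$ (a,b))"
        using sand_wk[where N="m^n" and K="kw d m K n" and c="cw m c n", OF Ks KW X a b]
          sand_comp[OF KW Ks X]
        by (simp add: sum_distrib_left mult_ac)
    qed
    also have "\<dots> = (\<Sum>u<m^n. \<Sum>s<m. complex_of_real (cw m c n u * c s) * (cadj (kw d m K n u * K s) * X * (kw d m K n u * K s)) $$ (a,b))"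
      by (rule sum.swap)
    also have "\<dots> = (\<Sum>i<m^n*m. complex_of_real (cw m c (Suc n) i) * (cadj (kw d m K (Suc n) i) * X * kw d m K (Suc n) i) $$ (a,b))"
      using m by (simp add: sum_divmod)
    also have "\<dots> = wk d (m^Suc n) (cw m c (Suc n)) (kw d m K (Suc n)) X $$ (a,b)"
      using a b by (simp add: wk_def mult.commute)
    finally show "(wk d m c K ^^ Suc n) X $$ (a,b) = wk d (m^Suc n) (cw m c (Suc n)) (kw d m K (Suc n)) X $$ (a,b)" .
  qed (use X in auto)
qed

lemma sum_delta_l: "b < (d::nat) \<Longrightarrow> (\<Sum>q<d. (if q = b then (1::'a::semiring_1) else 0) * f q) = f b"
  by (simp add: of_bool_def[symmetric])

lemma mult_dd[simp]: "A \<in> carrier_mat d d \<Longrightarrow> B \<in> carrier_mat d d \<Longrightarrow> A * B \<in> carrier_mat d d"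
  by (rule mult_carrier_mat)

definition Eab :: "nat \<Rightarrow> nat \<Rightarrow> nat \<Rightarrow> complex mat" where
  "Eab d a b = mat d d (\<lambda>(i,j). if i = a \<and> j = b then 1 else 0)"

lemma Eab_carrier[simp]: "Eab d a b \<in> carrier_mat d d"
  by (simp add: Eab_def)

lemma sandE:
  assumes M: "M \<in> carrier_mat d d" and "a < d" "b < d" "p < d" "q < d"
  shows "(cadj M * Eab d a b * M) $$ (p,q) = cnj (M $$ (a,p)) * M $$ (b,q)"
proof -
  have "(cadj M * Eab d a b * M) $$ (p,q) = (\<Sum>p'<d. \<Sum>q'<d. cnj (M $$ (p',p)) * Eab d a b $$ (p',q') * M $$ (q',q))"
    by (rule sand_entry[OF M Eab_carrier assms(4,5)])
  also have "\<dots> = (\<Sum>p'<d. (if p' = a then 1 else 0) * (\<Sum>q'<d. (if q' = b then 1 else 0) * (cnj (M $$ (p',p)) * M $$ (q',q))))"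
    by (intro sum.cong refl) (auto simp: Eab_def sum_distrib_left intro!: sum.cong)
  also have "\<dots> = cnj (M $$ (a,p)) * M $$ (b,q)"
    using assms by (simp add: sum_delta_l)
  finally show ?thesis .
qed

definition Dl :: "nat \<Rightarrow> (complex mat \<Rightarrow> complex mat) \<Rightarrow> real" where
  "Dl d \<Psi> = (\<Sum>a<3. \<Sum>b<3. Re (\<Psi> (Eab d a a) $$ (b,b) - \<Psi> (Eab d a b) $$ (b,a)))"

definition dl :: "complex mat \<Rightarrow> real" where
  "dl M = (cmod (M $$ (0,1) - M $$ (1,0)))^2 + (cmod (M $$ (0,2) - M $$ (2,0)))^2 + (cmod (M $$ (1,2) - M $$ (2,1)))^2"

lemma sum3: "(\<Sum>k<(3::nat). f k) = f 0 + f 1 + (f 2 :: 'a::comm_monoid_add)"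
  by (simp add: numeral_3_eq_3 numeral_2_eq_2 add.assoc)

lemma pair_id: "Re (cnj x * (x - y)) + Re (cnj y * (y - x)) = (cmod (x - y))^2"
  unfolding cmod_power2 by (simp add: power2_eq_square algebra_simps)

lemma dl_alt: "(\<Sum>a<3. \<Sum>b<3. Re (cnj (M $$ (a,b)) * (M $$ (a,b) - M $$ (b,a)))) = dl M"
  unfolding sum3 dl_def
  using pair_id[of "M $$ (0,1)" "M $$ (1,0)"] pair_id[of "M $$ (0,2)" "M $$ (2,0)"] pair_id[of "M $$ (1,2)" "M $$ (2,1)"]
  by simp

lemma dl_nonneg: "dl M \<ge> 0"
  by (simp add: dl_def)

lemma Dl_wk:
  assumes d: "d \<ge> 3" and M: "\<And>j. j < m \<Longrightarrow> M j \<in> carrier_mat d d"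
    and P: "\<And>X. X \<in> carrier_mat d d \<Longrightarrow> \<Psi> X = wk d m c M X"
  shows "Dl d \<Psi> = (\<Sum>j<m. c j * dl (M j))"
proof -
  have "Dl d \<Psi> = (\<Sum>a<3. \<Sum>b<3. \<Sum>j<m. c j * Re (cnj (M j $$ (a,b)) * (M j $$ (a,b) - M j $$ (b,a))))"
    unfolding Dl_def
  proof (intro sum.cong refl)
    fix a b assume a: "a \<in> {..<3::nat}" and b: "b \<in> {..<3::nat}"
    then have ad: "a < d" and bd: "b < d" using d by auto
    have "\<Psi> (Eab d a a) $$ (b,b) - \<Psi> (Eab d a b) $$ (b,a)
        = (\<Sum>j<m. complex_of_real (c j) * (cnj (M j $$ (a,b)) * (M j $$ (a,b) - M j $$ (b,a))))"
      using ad bd M by (simp add: P wk_def sandE sum_subtractf[symmetric] algebra_simps)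
    then show "Re (\<Psi> (Eab d a a) $$ (b,b) - \<Psi> (Eab d a b) $$ (b,a))
        = (\<Sum>j<m. c j * Re (cnj (M j $$ (a,b)) * (M j $$ (a,b) - M j $$ (b,a))))"
      by (simp add: Re_sum)
  qed
  also have "\<dots> = (\<Sum>j<m. c j * (\<Sum>a<3. \<Sum>b<3. Re (cnj (M j $$ (a,b)) * (M j $$ (a,b) - M j $$ (b,a)))))"
    by (simp add: sum_distrib_left, subst sum.swap, rule sum.cong[OF refl], rule sum.swap)
  also have "\<dots> = (\<Sum>j<m. c j * dl (M j))"
    by (simp only: dl_alt)
  finally show ?thesis .
qed


lemma NP:
  fixes G :: "nat \<Rightarrow> nat \<Rightarrow> complex"
  assumes G: "\<And>a a'. a < 3 \<Longrightarrow> a' < 3 \<Longrightarrow> (\<Sum>b<d. G b a * cnj (G b a')) = (if a = a' then 1 else 0)"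
  shows "(\<Sum>b<d. (cmod (\<Sum>a<3. G b a * w a))^2) = (\<Sum>a<3. (cmod (w a))^2)"
proof -
  have "complex_of_real (\<Sum>b<d. (cmod (\<Sum>a<3. G b a * w a))^2)
      = (\<Sum>b<d. (\<Sum>a<3. G b a * w a) * cnj (\<Sum>a<3. G b a * w a))"
    by (simp only: of_real_sum complex_norm_square)
  also have "\<dots> = (\<Sum>b<d. \<Sum>a<3. \<Sum>a'<3. G b a * w a * (cnj (G b a') * cnj (w a')))"
    by (simp add: cnj_sum sum_product)
  also have "\<dots> = (\<Sum>a<3. \<Sum>a'<3. \<Sum>b<d. G b a * w a * (cnj (G b a') * cnj (w a')))"
    by (subst sum.swap, rule sum.cong[OF refl], rule sum.swap)
  also have "\<dots> = (\<Sum>a<3. \<Sum>a'<3. w a * cnj (w a') * (\<Sum>b<d. G b a * cnj (G b a')))"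
    by (simp add: sum_distrib_left mult_ac)
  also have "\<dots> = (\<Sum>a<3. \<Sum>a'<3. w a * cnj (w a') * (if a = a' then 1 else 0))"
    by (intro sum.cong refl) (simp add: G)
  also have "\<dots> = (\<Sum>a<3. w a * cnj (w a))"
    by (simp add: if_distrib cong: if_cong)
  also have "\<dots> = complex_of_real (\<Sum>a<3. (cmod (w a))^2)"
    by (simp only: of_real_sum complex_norm_square)
  finally show ?thesis by (simp only: of_real_eq_iff)
qed

lemma par_ineq: "(cmod (p - q))^2 \<le> 2 * (cmod p)^2 + 2 * (cmod q)^2"
proof -
  have "cmod (p - q) \<le> cmod p + cmod q" by (rule norm_triangle_ineq4)
  then have "(cmod (p - q))^2 \<le> (cmod p + cmod q)^2" by (simp add: power_mono)
  also have "\<dots> \<le> 2 * (cmod p)^2 + 2 * (cmod q)^2"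
    using sum_squares_ge_zero[of "cmod p - cmod q" 0] by (simp add: power2_eq_square algebra_simps)
  finally show ?thesis .
qed

lemma KL_contr:
  assumes U: "unitary_mat d U" and d: "d \<ge> 3"
  shows "(\<Sum>b<3. (cmod (\<Sum>a<3. cnj (U $$ (a,b) - U $$ (b,a)) * w a))^2) \<le> 4 * (\<Sum>a<3. (cmod (w a))^2)"
proof -
  have Uc: "U \<in> carrier_mat d d" and C1: "cadj U * U = 1\<^sub>m d" and R1: "U * cadj U = 1\<^sub>m d"
    using U by (auto simp: unitary_mat_def)
  have R: "(\<Sum>b<d. U $$ (a,b) * cnj (U $$ (a',b))) = (if a = a' then 1 else 0)" if "a < d" "a' < d" for a a'
  proof -
    have "(U * cadj U) $$ (a,a') = (\<Sum>b<d. U $$ (a,b) * cnj (U $$ (a',b)))"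
      using Uc that by (subst mult_entry[of _ d d _ d]) auto
    then show ?thesis using R1 that by simp
  qed
  have C: "(\<Sum>b<d. cnj (U $$ (b,a)) * U $$ (b,a')) = (if a = a' then 1 else 0)" if "a < d" "a' < d" for a a'
  proof -
    have "(cadj U * U) $$ (a,a') = (\<Sum>b<d. cnj (U $$ (b,a)) * U $$ (b,a'))"
      using Uc that by (subst mult_entry[of _ d d _ d]) auto
    then show ?thesis using C1 that by simp
  qed
  define p where "p b = (\<Sum>a<3. cnj (U $$ (a,b)) * w a)" for b
  define q where "q b = (\<Sum>a<3. cnj (U $$ (b,a)) * w a)" for b
  have pq: "(\<Sum>a<3. cnj (U $$ (a,b) - U $$ (b,a)) * w a) = p b - q b" for b
    by (simp add: p_def q_def algebra_simps sum_subtractf)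
  have Np: "(\<Sum>b<d. (cmod (p b))^2) = (\<Sum>a<3. (cmod (w a))^2)"
    unfolding p_def
  proof (rule NP)
    fix a a' :: nat assume "a < 3" "a' < 3"
    then have "a < d" "a' < d" using d by auto
    then show "(\<Sum>b<d. cnj (U $$ (a,b)) * cnj (cnj (U $$ (a',b)))) = (if a = a' then 1 else 0)"
      using R[of a' a] by (auto simp: mult.commute)
  qed
  have Nq: "(\<Sum>b<d. (cmod (q b))^2) = (\<Sum>a<3. (cmod (w a))^2)"
    unfolding q_def
  proof (rule NP)
    fix a a' :: nat assume "a < 3" "a' < 3"
    then have "a < d" "a' < d" using d by auto
    then show "(\<Sum>b<d. cnj (U $$ (b,a)) * cnj (cnj (U $$ (b,a')))) = (if a = a' then 1 else 0)"
      using C[of a a'] by auto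
  qed
  have sub: "{..<3::nat} \<subseteq> {..<d}" using d by auto
  have "(\<Sum>b<3. (cmod (\<Sum>a<3. cnj (U $$ (a,b) - U $$ (b,a)) * w a))^2) = (\<Sum>b<3. (cmod (p b - q b))^2)"
    by (simp only: pq)
  also have "\<dots> \<le> (\<Sum>b<3. 2 * (cmod (p b))^2 + 2 * (cmod (q b))^2)"
    by (rule sum_mono, rule par_ineq)
  also have "\<dots> = 2 * (\<Sum>b<3. (cmod (p b))^2) + 2 * (\<Sum>b<3. (cmod (q b))^2)"
    by (simp add: sum.distrib sum_distrib_left)
  also have "\<dots> \<le> 2 * (\<Sum>b<d. (cmod (p b))^2) + 2 * (\<Sum>b<d. (cmod (q b))^2)"
    using sum_mono2[OF finite_lessThan sub, of "\<lambda>b. (cmod (p b))^2"]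
      sum_mono2[OF finite_lessThan sub, of "\<lambda>b. (cmod (q b))^2"] by simp
  also have "\<dots> = 4 * (\<Sum>a<3. (cmod (w a))^2)"
    using Np Nq by simp
  finally show ?thesis .
qed

lemma cm2: "cmod (x * cnj x + y * cnj y) = (cmod x)^2 + (cmod y)^2"
proof -
  have "x * cnj x + y * cnj y = complex_of_real ((cmod x)^2 + (cmod y)^2)"
    by (simp only: of_real_add complex_norm_square)
  then show ?thesis by (simp only: norm_of_real) simp
qed

lemma KL_poly:
  fixes x y z :: complex and A :: "nat \<Rightarrow> nat \<Rightarrow> complex"
  assumes A00: "A 0 0 = 0" and A11: "A 1 1 = 0" and A22: "A 2 2 = 0"
    and A01: "A 0 1 = x" and A10: "A 1 0 = -x" and A02: "A 0 2 = y" and A20: "A 2 0 = -y"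
    and A12: "A 1 2 = z" and A21: "A 2 1 = -z"
  shows "(\<Sum>i<3. \<Sum>b<3. (cmod (\<Sum>a<3. cnj (A a b) * A a i))^2) = 2 * ((cmod x)^2 + (cmod y)^2 + (cmod z)^2)^2"
    and "(\<Sum>i<3. \<Sum>a<3. (cmod (A a i))^2) = 2 * ((cmod x)^2 + (cmod y)^2 + (cmod z)^2)"
proof -
  show "(\<Sum>i<3. \<Sum>a<3. (cmod (A a i))^2) = 2 * ((cmod x)^2 + (cmod y)^2 + (cmod z)^2)"
    using assms[unfolded One_nat_def] by (simp add: sum3 assms)
  show "(\<Sum>i<3. \<Sum>b<3. (cmod (\<Sum>a<3. cnj (A a b) * A a i))^2) = 2 * ((cmod x)^2 + (cmod y)^2 + (cmod z)^2)^2"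
    using assms[unfolded One_nat_def] by (simp add: sum3 assms cm2 norm_mult power2_eq_square algebra_simps)
qed

lemma KL:
  assumes U: "unitary_mat d U" and d: "d \<ge> 3"
  shows "dl U \<le> 4"
proof -
  define A where "A a b = U $$ (a,b) - U $$ (b,a)" for a b
  define s where "s = (cmod (U$$(0,1) - U$$(1,0)))^2 + (cmod (U$$(0,2) - U$$(2,0)))^2 + (cmod (U$$(1,2) - U$$(2,1)))^2"
  have dls: "dl U = s" by (simp add: dl_def s_def)
  have P: "(\<Sum>i<3. \<Sum>b<3. (cmod (\<Sum>a<3. cnj (A a b) * A a i))^2) = 2 * s^2"
          "(\<Sum>i<3. \<Sum>a<3. (cmod (A a i))^2) = 2 * s"
    using KL_poly[of A "U$$(0,1) - U$$(1,0)" "U$$(0,2) - U$$(2,0)" "U$$(1,2) - U$$(2,1)"]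
    unfolding s_def by (simp_all add: A_def)
  have "(\<Sum>i<3. \<Sum>b<3. (cmod (\<Sum>a<3. cnj (A a b) * A a i))^2) \<le> (\<Sum>i<3::nat. 4 * (\<Sum>a<3. (cmod (A a i))^2))"
  proof (rule sum_mono)
    fix i :: nat
    show "(\<Sum>b<3. (cmod (\<Sum>a<3. cnj (A a b) * A a i))^2) \<le> 4 * (\<Sum>a<3. (cmod (A a i))^2)"
      using KL_contr[OF U d, of "\<lambda>a. A a i"] unfolding A_def .
  qed
  then have "2 * s^2 \<le> 4 * (2 * s)" using P by (simp add: sum_distrib_left[symmetric])
  then have ss: "s * s \<le> 4 * s" by (simp add: power2_eq_square)
  have s0: "s \<ge> 0" by (simp add: s_def)
  show ?thesis
  proof (rule ccontr)
    assume "\<not> dl U \<le> 4"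
    then have "4 < s" using dls by simp
    then have "4 * s < s * s" using mult_strict_right_mono[of 4 s s] by simp
    then show False using ss by simp
  qed
qed


definition bm :: "nat \<Rightarrow> (nat \<Rightarrow> nat \<Rightarrow> real) \<Rightarrow> complex \<Rightarrow> complex mat" where
  "bm d f c = mat d d (\<lambda>(i,j). if i < 3 \<and> j < 3 then complex_of_real (f i j) else if i = j then c else 0)"

definition m3 :: "(nat \<Rightarrow> nat \<Rightarrow> real) \<Rightarrow> (nat \<Rightarrow> nat \<Rightarrow> real) \<Rightarrow> nat \<Rightarrow> nat \<Rightarrow> real" where
  "m3 f g = (\<lambda>i j. \<Sum>k<3. f i k * g k j)"

lemma bm_carrier[simp]: "bm d f c \<in> carrier_mat d d"
  by (simp add: bm_def)

lemma bm_dims[simp]: "dim_row (bm d f c) = d" "dim_col (bm d f c) = d"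
  by (simp_all add: bm_def)

lemma bm_index: "i < d \<Longrightarrow> j < d \<Longrightarrow> bm d f c $$ (i,j) = (if i < 3 \<and> j < 3 then complex_of_real (f i j) else if i = j then c else 0)"
  by (simp add: bm_def)

lemma bm_mult:
  assumes d: "3 \<le> d"
  shows "bm d f c * bm d g e = bm d (m3 f g) (c * e)"
proof (rule eq_matI)
  fix i j assume "i < dim_row (bm d (m3 f g) (c * e))" "j < dim_col (bm d (m3 f g) (c * e))"
  then have i: "i < d" and j: "j < d" by auto
  have sub: "{..<3::nat} \<subseteq> {..<d}" using d by auto
  have "(bm d f c * bm d g e) $$ (i,j) = (\<Sum>k<d. bm d f c $$ (i,k) * bm d g e $$ (k,j))"
    using i j by (subst mult_entry[of _ d d _ d]) auto
  also have "\<dots> = bm d (m3 f g) (c * e) $$ (i,j)"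
  proof (cases "i < 3")
    case True
    note iT = True
    show ?thesis
    proof (cases "j < 3")
      case True
      have "(\<Sum>k<d. bm d f c $$ (i,k) * bm d g e $$ (k,j)) = (\<Sum>k<3. bm d f c $$ (i,k) * bm d g e $$ (k,j))"
        using sub iT True i j by (intro sum.mono_neutral_right) (auto simp: bm_index)
      also have "\<dots> = (\<Sum>k<3. complex_of_real (f i k * g k j))"
        using iT True d by (intro sum.cong refl) (auto simp: bm_index)
      finally show ?thesis using iT True i j by (simp add: bm_index m3_def)
    next
      case False
      have "(\<Sum>k<d. bm d f c $$ (i,k) * bm d g e $$ (k,j)) = 0"
        using iT False i j by (intro sum.neutral) (auto simp: bm_index)
      then show ?thesis using iT False i j by (simp add: bm_index)
    qed
  next
    case False
    have "(\<Sum>k<d. bm d f c $$ (i,k) * bm d g e $$ (k,j)) = (\<Sum>k<d. if k = i then c * bm d g e $$ (i,j) else 0)"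
      using False i j by (intro sum.cong refl) (auto simp: bm_index)
    also have "\<dots> = c * bm d g e $$ (i,j)" using i by simp
    finally show ?thesis using False i j by (simp add: bm_index)
  qed
  finally show "(bm d f c * bm d g e) $$ (i,j) = bm d (m3 f g) (c * e) $$ (i,j)" .
qed auto

lemma bm_cadj: "cadj (bm d f c) = bm d (\<lambda>i j. f j i) (cnj c)"
  by (rule eq_matI) (auto simp: bm_def cadj_def)

lemma bm_cong: "(\<And>i j. i < 3 \<Longrightarrow> j < 3 \<Longrightarrow> f i j = g i j) \<Longrightarrow> c = e \<Longrightarrow> bm d f c = bm d g e"
  by (rule eq_matI) (auto simp: bm_def)

lemma bm_one: "bm d (\<lambda>i j. if i = j then 1 else 0) 1 = 1\<^sub>m d"
  by (rule eq_matI) (auto simp: bm_def)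

lemma dl_bm: "3 \<le> d \<Longrightarrow> dl (bm d f c) = (f 0 1 - f 1 0)^2 + (f 0 2 - f 2 0)^2 + (f 1 2 - f 2 1)^2"
  by (simp add: dl_def bm_index flip: of_real_diff)

lemma less3: "(i::nat) < 3 \<Longrightarrow> i = 0 \<or> i = 1 \<or> i = 2"
  by auto

definition rr :: "real \<Rightarrow> nat \<Rightarrow> nat \<Rightarrow> real" where
  "rr t i j = (if i = 0 \<and> j = 0 then cos t else if i = 0 \<and> j = 1 then - sin t
     else if i = 1 \<and> j = 0 then sin t else if i = 1 \<and> j = 1 then cos t else if i = 2 \<and> j = 2 then 1 else 0)"

definition rotm :: "nat \<Rightarrow> real \<Rightarrow> complex mat" where
  "rotm d t = bm d (rr t) 1"

lemma rotm_carrier[simp]: "rotm d t \<in> carrier_mat d d"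
  by (simp add: rotm_def)

lemma m3_rr: "i < 3 \<Longrightarrow> j < 3 \<Longrightarrow> m3 (rr a) (rr b) i j = rr (a + b) i j"
  by (auto dest!: less3 simp: m3_def sum3 rr_def cos_add sin_add)

lemma rot_mult: "3 \<le> d \<Longrightarrow> rotm d a * rotm d b = rotm d (a + b)"
  unfolding rotm_def by (simp add: bm_mult) (rule bm_cong, simp_all add: m3_rr)

lemma rot_zero: "rotm d 0 = 1\<^sub>m d"
  unfolding rotm_def by (subst bm_one[symmetric]) (rule bm_cong, auto dest!: less3 simp: rr_def)

lemma rot_cadj: "cadj (rotm d t) = rotm d (- t)"
  unfolding rotm_def bm_cadj by (rule bm_cong) (auto dest!: less3 simp: rr_def)

definition aa :: "nat \<Rightarrow> nat \<Rightarrow> nat \<Rightarrow> real" where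
  "aa s i j = (if s = 1 then (if i = 0 \<and> j = 1 then 1 else if i = 1 \<and> j = 0 then -1 else 0)
     else if s = 2 then (if i = 0 \<and> j = 2 then 1 else if i = 2 \<and> j = 0 then -1 else 0)
     else (if i = 1 \<and> j = 2 then 1 else if i = 2 \<and> j = 1 then -1 else 0))"

lemma dl_rot_pi2: "3 \<le> d \<Longrightarrow> dl (rotm d (pi/2)) = 4"
  unfolding rotm_def by (simp add: dl_bm rr_def)

lemma dl_conj:
  assumes d: "3 \<le> d" and s: "s \<in> {1,2,3}"
  shows "dl (rotm d t * bm d (aa s) 0 * rotm d (- t)) = 4"
proof -
  define f where "f = m3 (m3 (rr t) (aa s)) (rr (-t))"
  have "rotm d t * bm d (aa s) 0 * rotm d (- t) = bm d f 0"
    unfolding rotm_def f_def using d by (simp add: bm_mult)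
  then have e: "dl (rotm d t * bm d (aa s) 0 * rotm d (- t)) = (f 0 1 - f 1 0)^2 + (f 0 2 - f 2 0)^2 + (f 1 2 - f 2 1)^2"
    using d by (simp add: dl_bm)
  have h: "(cos t)^2 + (sin t)^2 = 1" by simp
  show ?thesis
  proof (cases "s = 1")
    case True
    have "f 0 1 - f 1 0 = 2 * (cos t * cos t) + 2 * (sin t * sin t)" "f 0 2 - f 2 0 = 0" "f 1 2 - f 2 1 = 0"
      unfolding f_def m3_def by (simp_all add: True sum3 rr_def aa_def)
    moreover have "2 * (cos t * cos t) + 2 * (sin t * sin t) = 2" using sin_cos_squared_add3[of t] by linarith
    ultimately show ?thesis using e by simp
  next
    case False
    show ?thesis
    proof (cases "s = 2")
      case True
      have "f 0 1 - f 1 0 = 0" "f 0 2 - f 2 0 = 2 * cos t" "f 1 2 - f 2 1 = 2 * sin t"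
        unfolding f_def m3_def by (simp_all add: True sum3 rr_def aa_def)
      then show ?thesis using e h by (simp add: power_mult_distrib) (simp add: algebra_simps flip: distrib_left)
    next
      case False
      then have s3: "s = 3" using s \<open>s \<noteq> 1\<close> by auto
      have "f 0 1 - f 1 0 = 0" "f 0 2 - f 2 0 = - 2 * sin t" "f 1 2 - f 2 1 = 2 * cos t"
        unfolding f_def m3_def by (simp_all add: s3 sum3 rr_def aa_def)
      then show ?thesis using e h by (simp add: power_mult_distrib) (simp add: algebra_simps flip: distrib_left)
    qed
  qed
qed


definition kap :: "nat \<Rightarrow> real \<Rightarrow> real \<Rightarrow> nat \<Rightarrow> complex mat" where
  "kap d al be s = (if s = 0 then rotm d al else if s < 4 then bm d (aa s) 0 * rotm d be
      else bm d (\<lambda>_ _. 0) 1 * rotm d be)"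

definition wt :: "real \<Rightarrow> nat \<Rightarrow> real" where
  "wt e s = (if s = 0 then 1 - e else if s < 4 then e / 2 else e)"

lemma kap_carrier[simp]: "kap d al be s \<in> carrier_mat d d"
  by (simp add: kap_def)

lemma sum5: "(\<Sum>s<(5::nat). f s) = f 0 + f 1 + f 2 + f 3 + (f 4 :: 'a::comm_monoid_add)"
  by (simp add: eval_nat_numeral add.assoc)

lemma G_sum:
  assumes "a < 3" "b < 3"
  shows "m3 (\<lambda>i j. m3 (aa 1) (rr t) j i) (m3 (aa 1) (rr t)) a b
       + m3 (\<lambda>i j. m3 (aa 2) (rr t) j i) (m3 (aa 2) (rr t)) a b
       + m3 (\<lambda>i j. m3 (aa 3) (rr t) j i) (m3 (aa 3) (rr t)) a b = 2 * (if a = b then 1 else 0)"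
  using less3[OF assms(1)] less3[OF assms(2)] sin_cos_squared_add3[of t]
  apply (elim disjE)
  apply (simp_all add: m3_def sum3 rr_def aa_def algebra_simps)
  done

lemma H_sum:
  assumes "a < 3" "b < 3"
  shows "m3 (m3 (aa 1) (rr t)) (\<lambda>i j. m3 (aa 1) (rr t) j i) a b
       + m3 (m3 (aa 2) (rr t)) (\<lambda>i j. m3 (aa 2) (rr t) j i) a b
       + m3 (m3 (aa 3) (rr t)) (\<lambda>i j. m3 (aa 3) (rr t) j i) a b = 2 * (if a = b then 1 else 0)"
  using less3[OF assms(1)] less3[OF assms(2)] sin_cos_squared_add3[of t]
  apply (elim disjE)
  apply (simp_all add: m3_def sum3 rr_def aa_def algebra_simps)
  done

lemma m3_zero_l: "m3 (\<lambda>i j. 0) f = (\<lambda>i j. 0)" by (simp add: m3_def)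
lemma m3_zero_r: "m3 f (\<lambda>i j. 0) = (\<lambda>i j. 0)" by (simp add: m3_def)

lemma rr0: "a < 3 \<Longrightarrow> b < 3 \<Longrightarrow> rr 0 a b = (if a = b then 1 else 0)"
  by (auto dest!: less3 simp: rr_def)

lemma kap_prods:
  assumes d: "3 \<le> d"
  shows "cadj (kap d al be 0) * kap d al be 0 = bm d (rr 0) 1"
    "kap d al be 0 * cadj (kap d al be 0) = bm d (rr 0) 1"
    "s \<in> {1,2,3} \<Longrightarrow> cadj (kap d al be s) * kap d al be s = bm d (m3 (\<lambda>i j. m3 (aa s) (rr be) j i) (m3 (aa s) (rr be))) 0"
    "s \<in> {1,2,3} \<Longrightarrow> kap d al be s * cadj (kap d al be s) = bm d (m3 (m3 (aa s) (rr be)) (\<lambda>i j. m3 (aa s) (rr be) j i)) 0"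
    "cadj (kap d al be 4) * kap d al be 4 = bm d (\<lambda>i j. 0) 1"
    "kap d al be 4 * cadj (kap d al be 4) = bm d (\<lambda>i j. 0) 1"
proof -
  show "cadj (kap d al be 0) * kap d al be 0 = bm d (rr 0) 1"
    using d by (simp add: kap_def rot_cadj rot_mult) (simp add: rotm_def)
  show "kap d al be 0 * cadj (kap d al be 0) = bm d (rr 0) 1"
    using d by (simp add: kap_def rot_cadj rot_mult) (simp add: rotm_def)
  show "s \<in> {1,2,3} \<Longrightarrow> cadj (kap d al be s) * kap d al be s = bm d (m3 (\<lambda>i j. m3 (aa s) (rr be) j i) (m3 (aa s) (rr be))) 0"
    using d by (auto simp: kap_def cadj_mult[of _ d d _ d] rot_cadj bm_cadj rotm_def bm_mult)
  show "s \<in> {1,2,3} \<Longrightarrow> kap d al be s * cadj (kap d al be s) = bm d (m3 (m3 (aa s) (rr be)) (\<lambda>i j. m3 (aa s) (rr be) j i)) 0"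
    using d by (auto simp: kap_def cadj_mult[of _ d d _ d] rot_cadj bm_cadj rotm_def bm_mult)
  show "cadj (kap d al be 4) * kap d al be 4 = bm d (\<lambda>i j. 0) 1"
    using d by (simp add: kap_def cadj_mult[of _ d d _ d] rot_cadj bm_cadj rotm_def bm_mult m3_zero_l m3_zero_r)
  show "kap d al be 4 * cadj (kap d al be 4) = bm d (\<lambda>i j. 0) 1"
    using d by (simp add: kap_def cadj_mult[of _ d d _ d] rot_cadj bm_cadj rotm_def bm_mult m3_zero_l m3_zero_r)
qed

lemma kap_U1:
  assumes d: "3 \<le> d" and a: "a < d" and b: "b < d"
  shows "(\<Sum>s<5. complex_of_real (wt e s) * (cadj (kap d al be s) * kap d al be s) $$ (a,b)) = (if a = b then 1 else 0)"
proof -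
  have "(\<Sum>s<5. complex_of_real (wt e s) * (cadj (kap d al be s) * kap d al be s) $$ (a,b))
     = complex_of_real (1 - e) * bm d (rr 0) 1 $$ (a,b)
      + complex_of_real (e/2) * (bm d (m3 (\<lambda>i j. m3 (aa 1) (rr be) j i) (m3 (aa 1) (rr be))) 0 $$ (a,b)
      + bm d (m3 (\<lambda>i j. m3 (aa 2) (rr be) j i) (m3 (aa 2) (rr be))) 0 $$ (a,b)
      + bm d (m3 (\<lambda>i j. m3 (aa 3) (rr be) j i) (m3 (aa 3) (rr be))) 0 $$ (a,b))
      + complex_of_real e * bm d (\<lambda>i j. 0) 1 $$ (a,b)"
    unfolding sum5 using kap_prods[OF d] by (simp add: wt_def algebra_simps)
  also have "\<dots> = (if a = b then 1 else 0)"
  proof (cases "a < 3 \<and> b < 3")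
    case True
    have "(1 - e) * rr 0 a b + e / 2 * (m3 (\<lambda>i j. m3 (aa 1) (rr be) j i) (m3 (aa 1) (rr be)) a b
       + m3 (\<lambda>i j. m3 (aa 2) (rr be) j i) (m3 (aa 2) (rr be)) a b
       + m3 (\<lambda>i j. m3 (aa 3) (rr be) j i) (m3 (aa 3) (rr be)) a b) = (if a = b then 1 else 0)"
      using True by (simp add: G_sum G_sum[unfolded One_nat_def] rr0)
    then have "complex_of_real ((1 - e) * rr 0 a b + e / 2 * (m3 (\<lambda>i j. m3 (aa 1) (rr be) j i) (m3 (aa 1) (rr be)) a b
       + m3 (\<lambda>i j. m3 (aa 2) (rr be) j i) (m3 (aa 2) (rr be)) a b
       + m3 (\<lambda>i j. m3 (aa 3) (rr be) j i) (m3 (aa 3) (rr be)) a b)) = (if a = b then 1 else 0)"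
      by simp
    then show ?thesis using True a b by (simp add: bm_index)
  next
    case False
    then show ?thesis using a b by (auto simp: bm_index)
  qed
  finally show ?thesis .
qed

lemma kap_T1:
  assumes d: "3 \<le> d" and a: "a < d" and b: "b < d"
  shows "(\<Sum>s<5. complex_of_real (wt e s) * (kap d al be s * cadj (kap d al be s)) $$ (a,b)) = (if a = b then 1 else 0)"
proof -
  have "(\<Sum>s<5. complex_of_real (wt e s) * (kap d al be s * cadj (kap d al be s)) $$ (a,b))
     = complex_of_real (1 - e) * bm d (rr 0) 1 $$ (a,b)
      + complex_of_real (e/2) * (bm d (m3 (m3 (aa 1) (rr be)) (\<lambda>i j. m3 (aa 1) (rr be) j i)) 0 $$ (a,b)
      + bm d (m3 (m3 (aa 2) (rr be)) (\<lambda>i j. m3 (aa 2) (rr be) j i)) 0 $$ (a,b)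
      + bm d (m3 (m3 (aa 3) (rr be)) (\<lambda>i j. m3 (aa 3) (rr be) j i)) 0 $$ (a,b))
      + complex_of_real e * bm d (\<lambda>i j. 0) 1 $$ (a,b)"
    unfolding sum5 using kap_prods[OF d] by (simp add: wt_def algebra_simps)
  also have "\<dots> = (if a = b then 1 else 0)"
  proof (cases "a < 3 \<and> b < 3")
    case True
    have "(1 - e) * rr 0 a b + e / 2 * (m3 (m3 (aa 1) (rr be)) (\<lambda>i j. m3 (aa 1) (rr be) j i) a b
       + m3 (m3 (aa 2) (rr be)) (\<lambda>i j. m3 (aa 2) (rr be) j i) a b
       + m3 (m3 (aa 3) (rr be)) (\<lambda>i j. m3 (aa 3) (rr be) j i) a b) = (if a = b then 1 else 0)"
      using True by (simp add: H_sum H_sum[unfolded One_nat_def] rr0)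
    then have "complex_of_real ((1 - e) * rr 0 a b + e / 2 * (m3 (m3 (aa 1) (rr be)) (\<lambda>i j. m3 (aa 1) (rr be) j i) a b
       + m3 (m3 (aa 2) (rr be)) (\<lambda>i j. m3 (aa 2) (rr be) j i) a b
       + m3 (m3 (aa 3) (rr be)) (\<lambda>i j. m3 (aa 3) (rr be) j i) a b)) = (if a = b then 1 else 0)"
      by simp
    then show ?thesis using True a b by (simp add: bm_index)
  next
    case False
    then show ?thesis using a b by (auto simp: bm_index)
  qed
  finally show ?thesis .
qed



definition Gt :: "nat \<Rightarrow> real \<Rightarrow> real \<Rightarrow> nat \<Rightarrow> real \<Rightarrow> complex mat \<Rightarrow> real" where
  "Gt d al be p r Q = (\<Sum>j\<in>{1,2,3}. dl (rotm d (real p * al) * (bm d (aa j) 0 * (rotm d be * (rotm d r * Q)))))"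

lemma wt_nonneg: "0 \<le> e \<Longrightarrow> e \<le> 1 \<Longrightarrow> wt e s \<ge> 0"
  by (simp add: wt_def)

lemma cw_nonneg: "0 \<le> e \<Longrightarrow> e \<le> 1 \<Longrightarrow> cw 5 (wt e) m u \<ge> 0"
  by (induction m arbitrary: u) (auto intro!: mult_nonneg_nonneg wt_nonneg)

lemma cw_zero: "cw 5 (wt e) m 0 = (1 - e)^m"
  by (induction m) (auto simp: wt_def)

lemma kw_zero: "3 \<le> d \<Longrightarrow> kw d 5 (kap d al be) m 0 = rotm d (real m * al)"
proof (induction m)
  case 0 then show ?case by (simp add: rot_zero)
next
  case (Suc m)
  then show ?case by (simp add: kap_def rot_mult distrib_right add.commute)
qed

lemma kw_carrier5: "kw d 5 (kap d al be) m u \<in> carrier_mat d d"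
  by (rule kw_carrier) auto

lemma Gt_shift:
  assumes d: "3 \<le> d" and Q: "Q \<in> carrier_mat d d"
  shows "Gt d al be p r (rotm d al * Q) = Gt d al be p (r + al) Q"
proof -
  have "rotm d r * (rotm d al * Q) = rotm d (r + al) * Q"
    using Q d by (simp add: assoc_mult_mat[symmetric, of _ d d _ d _ d] rot_mult)
  then show ?thesis by (simp add: Gt_def)
qed

lemma claim:
  assumes d: "3 \<le> d" and e0: "0 \<le> e" and e1: "e \<le> 1"
  shows "\<forall>Q \<in> carrier_mat d d.
    (\<Sum>u<5^m. cw 5 (wt e) m u * dl (kw d 5 (kap d al be) m u * Q))
      \<ge> (1 - e)^m * dl (rotm d (real m * al) * Q)
        + (\<Sum>p<m. e / 2 * (1 - e)^(m - 1) * Gt d al be p ((real m - 1 - real p) * al) Q)"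
proof (induction m)
  case 0
  show ?case
  proof
    fix Q :: "complex mat" assume Q: "Q \<in> carrier_mat d d"
    show "(\<Sum>u<5^0. cw 5 (wt e) 0 u * dl (kw d 5 (kap d al be) 0 u * Q))
      \<ge> (1 - e)^0 * dl (rotm d (real 0 * al) * Q)
        + (\<Sum>p<0. e / 2 * (1 - e)^(0 - 1) * Gt d al be p ((real 0 - 1 - real p) * al) Q)"
      using Q by (simp add: rot_zero)
  qed
next
  case (Suc m)
  show ?case
  proof
    fix Q :: "complex mat" assume Q: "Q \<in> carrier_mat d d"
    let ?K = "kw d 5 (kap d al be) m"
    let ?c = "cw 5 (wt e) m"
    have KQ: "kw d 5 (kap d al be) (Suc m) (u*5+s) * Q = ?K u * (kap d al be s * Q)" if "s < 5" for u s
      using that Q kw_carrier5 by (simp add: assoc_mult_mat[of _ d d _ d _ d])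
    have "(\<Sum>u<5^Suc m. cw 5 (wt e) (Suc m) u * dl (kw d 5 (kap d al be) (Suc m) u * Q))
       = (\<Sum>u<5^m. \<Sum>s<5. ?c u * wt e s * dl (?K u * (kap d al be s * Q)))"
    proof -
      have "(\<Sum>u<5^Suc m. cw 5 (wt e) (Suc m) u * dl (kw d 5 (kap d al be) (Suc m) u * Q))
         = (\<Sum>u<5^m*5. cw 5 (wt e) (Suc m) u * dl (kw d 5 (kap d al be) (Suc m) u * Q))"
        by (simp add: mult.commute)
      also have "\<dots> = (\<Sum>u<5^m. \<Sum>s<5. cw 5 (wt e) (Suc m) (u*5+s) * dl (kw d 5 (kap d al be) (Suc m) (u*5+s) * Q))"
        by (rule sum_divmod)
      also have "\<dots> = (\<Sum>u<5^m. \<Sum>s<5. ?c u * wt e s * dl (?K u * (kap d al be s * Q)))"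
        by (intro sum.cong refl, subst KQ) auto
      finally show ?thesis .
    qed
    also have "\<dots> = (\<Sum>s<5. \<Sum>u<5^m. ?c u * wt e s * dl (?K u * (kap d al be s * Q)))"
      by (rule sum.swap)
    also have "\<dots> \<ge> (\<Sum>u<5^m. ?c u * wt e 0 * dl (?K u * (kap d al be 0 * Q)))
       + (\<Sum>u<5^m. ?c u * wt e 1 * dl (?K u * (kap d al be 1 * Q)))
       + (\<Sum>u<5^m. ?c u * wt e 2 * dl (?K u * (kap d al be 2 * Q)))
       + (\<Sum>u<5^m. ?c u * wt e 3 * dl (?K u * (kap d al be 3 * Q)))"
    proof -
      have "0 \<le> (\<Sum>u<5^m. ?c u * wt e 4 * dl (?K u * (kap d al be 4 * Q)))"
        using e0 e1 by (intro sum_nonneg mult_nonneg_nonneg cw_nonneg wt_nonneg dl_nonneg)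
      then show ?thesis unfolding sum5 by linarith
    qed
    finally have S1: "(\<Sum>u<5^Suc m. cw 5 (wt e) (Suc m) u * dl (kw d 5 (kap d al be) (Suc m) u * Q))
       \<ge> (\<Sum>u<5^m. ?c u * wt e 0 * dl (?K u * (kap d al be 0 * Q)))
       + (\<Sum>u<5^m. ?c u * wt e 1 * dl (?K u * (kap d al be 1 * Q)))
       + (\<Sum>u<5^m. ?c u * wt e 2 * dl (?K u * (kap d al be 2 * Q)))
       + (\<Sum>u<5^m. ?c u * wt e 3 * dl (?K u * (kap d al be 3 * Q)))" .
    have RQ: "rotm d al * Q \<in> carrier_mat d d" using Q by simp
    have IH: "(\<Sum>u<5^m. ?c u * dl (?K u * (rotm d al * Q)))
      \<ge> (1 - e)^m * dl (rotm d (real m * al) * (rotm d al * Q))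
        + (\<Sum>p<m. e / 2 * (1 - e)^(m - 1) * Gt d al be p ((real m - 1 - real p) * al) (rotm d al * Q))"
      using Suc.IH RQ by blast
    have T0: "(\<Sum>u<5^m. ?c u * wt e 0 * dl (?K u * (kap d al be 0 * Q)))
       = (1 - e) * (\<Sum>u<5^m. ?c u * dl (?K u * (rotm d al * Q)))"
      by (simp add: wt_def kap_def sum_distrib_left mult_ac)
    have E1: "dl (rotm d (real m * al) * (rotm d al * Q)) = dl (rotm d (real (Suc m) * al) * Q)"
      using Q d by (simp add: assoc_mult_mat[symmetric, of _ d d _ d _ d] rot_mult distrib_right add.commute)
    have E2: "(1 - e) * (\<Sum>p<m. e / 2 * (1 - e)^(m - 1) * Gt d al be p ((real m - 1 - real p) * al) (rotm d al * Q))
       = (\<Sum>p<m. e / 2 * (1 - e)^(Suc m - 1) * Gt d al be p ((real (Suc m) - 1 - real p) * al) Q)"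
    proof (cases m)
      case 0 then show ?thesis by simp
    next
      case (Suc k)
      have "(1 - e) * (\<Sum>p<m. e / 2 * (1 - e)^(m - 1) * Gt d al be p ((real m - 1 - real p) * al) (rotm d al * Q))
         = (\<Sum>p<m. e / 2 * (1 - e)^(Suc m - 1) * Gt d al be p ((real m - 1 - real p) * al + al) Q)"
        unfolding sum_distrib_left
      proof (intro sum.cong refl)
        fix p assume "p \<in> {..<m}"
        show "(1 - e) * (e / 2 * (1 - e)^(m - 1) * Gt d al be p ((real m - 1 - real p) * al) (rotm d al * Q))
          = e / 2 * (1 - e)^(Suc m - 1) * Gt d al be p ((real m - 1 - real p) * al + al) Q"
          using Suc by (simp add: Gt_shift[OF d Q] mult_ac)
      qed
      also have "\<dots> = (\<Sum>p<m. e / 2 * (1 - e)^(Suc m - 1) * Gt d al be p ((real (Suc m) - 1 - real p) * al) Q)"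
        by (intro sum.cong refl) (simp add: algebra_simps)
      finally show ?thesis .
    qed
    have Tj: "(\<Sum>u<5^m. ?c u * wt e j * dl (?K u * (kap d al be j * Q)))
       \<ge> e / 2 * (1 - e)^m * dl (rotm d (real m * al) * (bm d (aa j) 0 * (rotm d be * (rotm d ((real (Suc m) - 1 - real m) * al) * Q))))"
      if j: "j \<in> {1,2,3}" for j
    proof -
      have "?c 0 * wt e j * dl (?K 0 * (kap d al be j * Q)) \<le> (\<Sum>u<5^m. ?c u * wt e j * dl (?K u * (kap d al be j * Q)))"
        using e0 e1 by (intro member_le_sum mult_nonneg_nonneg cw_nonneg wt_nonneg dl_nonneg) auto
      moreover have "?c 0 * wt e j * dl (?K 0 * (kap d al be j * Q))
          = e / 2 * (1 - e)^m * dl (rotm d (real m * al) * (bm d (aa j) 0 * (rotm d be * (rotm d ((real (Suc m) - 1 - real m) * al) * Q))))"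
        using j d Q by (auto simp: cw_zero kw_zero wt_def kap_def rot_zero assoc_mult_mat[of _ d d _ d _ d])
      ultimately show ?thesis by simp
    qed
    have Gm: "Gt d al be m ((real (Suc m) - 1 - real m) * al) Q
      = dl (rotm d (real m * al) * (bm d (aa 1) 0 * (rotm d be * (rotm d ((real (Suc m) - 1 - real m) * al) * Q))))
      + dl (rotm d (real m * al) * (bm d (aa 2) 0 * (rotm d be * (rotm d ((real (Suc m) - 1 - real m) * al) * Q))))
      + dl (rotm d (real m * al) * (bm d (aa 3) 0 * (rotm d be * (rotm d ((real (Suc m) - 1 - real m) * al) * Q))))"
      by (simp add: Gt_def)
    have "(1 - e)^Suc m * dl (rotm d (real (Suc m) * al) * Q)
        + (\<Sum>p<Suc m. e / 2 * (1 - e)^(Suc m - 1) * Gt d al be p ((real (Suc m) - 1 - real p) * al) Q)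
      = (1 - e) * ((1 - e)^m * dl (rotm d (real m * al) * (rotm d al * Q))
        + (\<Sum>p<m. e / 2 * (1 - e)^(m - 1) * Gt d al be p ((real m - 1 - real p) * al) (rotm d al * Q)))
        + e / 2 * (1 - e)^m * Gt d al be m ((real (Suc m) - 1 - real m) * al) Q"
      using E1 E2 by (simp add: algebra_simps)
    also have "\<dots> \<le> (\<Sum>u<5^m. ?c u * wt e 0 * dl (?K u * (kap d al be 0 * Q)))
       + (\<Sum>u<5^m. ?c u * wt e 1 * dl (?K u * (kap d al be 1 * Q)))
       + (\<Sum>u<5^m. ?c u * wt e 2 * dl (?K u * (kap d al be 2 * Q)))
       + (\<Sum>u<5^m. ?c u * wt e 3 * dl (?K u * (kap d al be 3 * Q)))"
    proof -
      have M0: "(1 - e) * ((1 - e)^m * dl (rotm d (real m * al) * (rotm d al * Q))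
        + (\<Sum>p<m. e / 2 * (1 - e)^(m - 1) * Gt d al be p ((real m - 1 - real p) * al) (rotm d al * Q)))
        \<le> (\<Sum>u<5^m. ?c u * wt e 0 * dl (?K u * (kap d al be 0 * Q)))"
        unfolding T0 using mult_left_mono[OF IH] e1 by simp
      have M1: "e / 2 * (1 - e)^m * Gt d al be m ((real (Suc m) - 1 - real m) * al) Q
        = e / 2 * (1 - e)^m * dl (rotm d (real m * al) * (bm d (aa 1) 0 * (rotm d be * (rotm d ((real (Suc m) - 1 - real m) * al) * Q))))
        + e / 2 * (1 - e)^m * dl (rotm d (real m * al) * (bm d (aa 2) 0 * (rotm d be * (rotm d ((real (Suc m) - 1 - real m) * al) * Q))))
        + e / 2 * (1 - e)^m * dl (rotm d (real m * al) * (bm d (aa 3) 0 * (rotm d be * (rotm d ((real (Suc m) - 1 - real m) * al) * Q))))"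
        unfolding Gm by (simp only: distrib_left)
      have i1: "(1::nat) \<in> {1,2,3}" and i2: "(2::nat) \<in> {1,2,3}" and i3: "(3::nat) \<in> {1,2,3}" by simp_all
      show ?thesis using M0 M1 Tj[OF i1] Tj[OF i2] Tj[OF i3] by linarith
    qed
    also have "\<dots> \<le> (\<Sum>u<5^Suc m. cw 5 (wt e) (Suc m) u * dl (kw d 5 (kap d al be) (Suc m) u * Q))"
      by (rule S1)
    finally show "(\<Sum>u<5^Suc m. cw 5 (wt e) (Suc m) u * dl (kw d 5 (kap d al be) (Suc m) u * Q))
      \<ge> (1 - e)^Suc m * dl (rotm d (real (Suc m) * al) * Q)
        + (\<Sum>p<Suc m. e / 2 * (1 - e)^(Suc m - 1) * Gt d al be p ((real (Suc m) - 1 - real p) * al) Q)" .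
  qed
qed



lemma final_ineq:
  fixes N :: nat
  assumes N: "N \<ge> 1" and e: "e = 1 / (3 * (real N)^2)"
  shows "4 * (1 - e)^N + 6 * real N * e * (1 - e)^(N - 1) > 4"
proof -
  define n where "n = real N"
  have n1: "n \<ge> 1" using N by (simp add: n_def)
  have epos: "e > 0" using e n1 by (simp add: n_def)
  have e1: "e \<le> 1/3"
  proof -
    have h: "3 \<le> 3 * n^2" using n1 by (simp add: one_le_power)
    have "1 / (3 * n^2) \<le> 1 / 3" using h by (intro divide_left_mono) auto
    then show ?thesis using e by (simp add: n_def)
  qed
  obtain K where K: "N = Suc K" using N by (cases N) auto
  have nK: "n = real K + 1" using K by (simp add: n_def)
  have B: "(1 - e)^K \<ge> 1 - real K * e"
    using Bernoulli_inequality[of "-e" K] e1 by simp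
  have ne: "6 * n * e \<ge> 0" using n1 epos by simp
  have f4: "4 * (1 - e) = 4 - 4 * e" by simp
  have P: "4 * (1 - e) + 6 * n * e > 0" using e1 ne f4 by linarith
  have eq: "4 * (1 - e)^N + 6 * real N * e * (1 - e)^(N - 1) = (1 - e)^K * (4 * (1 - e) + 6 * n * e)"
    using K by (simp add: n_def algebra_simps)
  have ge: "(1 - e)^K * (4 * (1 - e) + 6 * n * e) \<ge> (1 - real K * e) * (4 * (1 - e) + 6 * n * e)"
    using B P by (simp add: mult_right_mono)
  have ex: "(1 - real K * e) * (4 * (1 - e) + 6 * n * e) = 4 + 2 * n * e - real K * (6 * n - 4) * e^2"
    using nK by (simp add: algebra_simps power2_eq_square)
  have k1: "real K * (6 * n - 4) < 6 * n^3"
  proof -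
    have "real K * (6 * n - 4) = (n - 1) * (6 * n - 4)" using nK by simp
    also have "\<dots> = 6 * n^2 - 10 * n + 4" by (simp add: algebra_simps power2_eq_square)
    also have "\<dots> < 6 * n^2" using n1 by simp
    also have "\<dots> \<le> 6 * n^3" using n1 by (simp add: power_increasing)
    finally show ?thesis .
  qed
  have k2: "real K * (6 * n - 4) * e < 2 * n"
  proof -
    have "real K * (6 * n - 4) * e = real K * (6 * n - 4) / (3 * n^2)" using e by (simp add: n_def)
    also have "\<dots> < 6 * n^3 / (3 * n^2)" using k1 n1 by (intro divide_strict_right_mono) auto
    also have "\<dots> = 2 * n" using n1 by (simp add: field_simps power2_eq_square power3_eq_cube)
    finally show ?thesis .
  qed
  have "real K * (6 * n - 4) * e^2 < 2 * n * e"
    using mult_strict_right_mono[OF k2 epos] by (simp add: power2_eq_square mult_ac)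
  then show ?thesis using eq ge ex by linarith
qed


lemma lower:
  assumes d: "3 \<le> d" and N: "N \<ge> 1" and e0: "0 \<le> e" and e1: "e \<le> 1"
    and al: "al = pi / (2 * real N)" and be: "be = (1 - real N) * al"
  shows "(\<Sum>u<5^N. cw 5 (wt e) N u * dl (kw d 5 (kap d al be) N u))
    \<ge> 4 * (1 - e)^N + 6 * real N * e * (1 - e)^(N - 1)"
proof -
  have one: "1\<^sub>m d \<in> carrier_mat d d" by simp
  have C: "(\<Sum>u<5^N. cw 5 (wt e) N u * dl (kw d 5 (kap d al be) N u * 1\<^sub>m d))
      \<ge> (1 - e)^N * dl (rotm d (real N * al) * 1\<^sub>m d)
        + (\<Sum>p<N. e / 2 * (1 - e)^(N - 1) * Gt d al be p ((real N - 1 - real p) * al) (1\<^sub>m d))"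
    using claim[OF d e0 e1, of N al be] one by blast
  have L: "(\<Sum>u<5^N. cw 5 (wt e) N u * dl (kw d 5 (kap d al be) N u * 1\<^sub>m d))
      = (\<Sum>u<5^N. cw 5 (wt e) N u * dl (kw d 5 (kap d al be) N u))"
  proof -
    have "\<And>u. kw d 5 (kap d al be) N u * 1\<^sub>m d = kw d 5 (kap d al be) N u"
      by (rule right_mult_one_mat[OF kw_carrier5])
    then show ?thesis by simp
  qed
  have Npos: "real N > 0" using N by simp
  have R1: "dl (rotm d (real N * al) * 1\<^sub>m d) = 4"
  proof -
    have h: "real N * al = pi / 2" using al Npos by (simp add: field_simps)
    have "rotm d (real N * al) * 1\<^sub>m d = rotm d (pi / 2)" unfolding h by (rule right_mult_one_mat, rule rotm_carrier)
    then show ?thesis using d by (simp add: dl_rot_pi2)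
  qed
  have R2: "Gt d al be p ((real N - 1 - real p) * al) (1\<^sub>m d) = 12" for p
  proof -
    have ang: "be + (real N - 1 - real p) * al = - (real p * al)" using be by (simp add: algebra_simps)
    have "dl (rotm d (real p * al) * (bm d (aa j) 0 * (rotm d be * (rotm d ((real N - 1 - real p) * al) * 1\<^sub>m d)))) = 4"
      if j: "j \<in> {1,2,3}" for j
    proof -
      have r1: "rotm d ((real N - 1 - real p) * al) * 1\<^sub>m d = rotm d ((real N - 1 - real p) * al)"
        by (rule right_mult_one_mat, rule rotm_carrier)
      have "rotm d be * (rotm d ((real N - 1 - real p) * al) * 1\<^sub>m d) = rotm d (be + (real N - 1 - real p) * al)"
        unfolding r1 by (rule rot_mult[OF d])
      also have "\<dots> = rotm d (- (real p * al))" by (simp only: ang)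
      finally have "rotm d be * (rotm d ((real N - 1 - real p) * al) * 1\<^sub>m d) = rotm d (- (real p * al))" .
      then have "rotm d (real p * al) * (bm d (aa j) 0 * (rotm d be * (rotm d ((real N - 1 - real p) * al) * 1\<^sub>m d)))
          = rotm d (real p * al) * bm d (aa j) 0 * rotm d (- (real p * al))"
        by (simp add: assoc_mult_mat[of _ d d _ d _ d])
      then show ?thesis using dl_conj[OF d j] by simp
    qed
    then show ?thesis unfolding Gt_def by simp
  qed
  have "(\<Sum>p<N. e / 2 * (1 - e)^(N - 1) * Gt d al be p ((real N - 1 - real p) * al) (1\<^sub>m d))
      = 6 * real N * e * (1 - e)^(N - 1)"
    by (simp add: R2)
  then show ?thesis using C L R1 by simp
qed

theorem theorem4p8:
  fixes d :: nat
  assumes "d \<ge> 3"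
  shows "\<not> (\<exists>n::nat. n \<ge> 1 \<and> (\<forall>\<Phi>. unital_channel d \<Phi> \<longrightarrow> mixed_unitary d (\<Phi> ^^ n)))"
proof
  assume "\<exists>n::nat. n \<ge> 1 \<and> (\<forall>\<Phi>. unital_channel d \<Phi> \<longrightarrow> mixed_unitary d (\<Phi> ^^ n))"
  then obtain N :: nat where N: "N \<ge> 1" and H: "\<And>\<Phi>. unital_channel d \<Phi> \<Longrightarrow> mixed_unitary d (\<Phi> ^^ N)"
    by blast
  have d: "3 \<le> d" using assms by simp
  define e where "e = 1 / (3 * (real N)^2)"
  define al where "al = pi / (2 * real N)"
  define be where "be = (1 - real N) * al"
  have epos: "e > 0" using N by (simp add: e_def)
  have e1: "e \<le> 1"
  proof -
    have "1 \<le> (real N)^2" using N by (simp add: one_le_power)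
    then have "1 \<le> 3 * (real N)^2" by simp
    then have "1 / (3 * (real N)^2) \<le> 1 / 1" using N by (intro divide_left_mono) auto
    then show ?thesis unfolding e_def by simp
  qed
  have e0: "0 \<le> e" using epos by simp
  define \<Phi> where "\<Phi> = wk d 5 (wt e) (kap d al be)"
  have UC: "unital_channel d \<Phi>"
    unfolding \<Phi>_def
  proof (rule wk_unital_channel)
    show "\<And>j. j < 5 \<Longrightarrow> kap d al be j \<in> carrier_mat d d" by simp
    show "\<And>j. j < 5 \<Longrightarrow> 0 \<le> wt e j" using e0 e1 by (simp add: wt_nonneg)
    show "\<And>a b. a < d \<Longrightarrow> b < d \<Longrightarrow> (\<Sum>j<5. complex_of_real (wt e j) * (cadj (kap d al be j) * kap d al be j) $$ (a, b)) = (if a = b then 1 else 0)"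
      by (rule kap_U1[OF d])
    show "\<And>a b. a < d \<Longrightarrow> b < d \<Longrightarrow> (\<Sum>j<5. complex_of_real (wt e j) * (kap d al be j * cadj (kap d al be j)) $$ (a, b)) = (if a = b then 1 else 0)"
      by (rule kap_T1[OF d])
  qed
  have MU: "mixed_unitary d (\<Phi> ^^ N)" by (rule H[OF UC])
  have low: "Dl d (\<Phi> ^^ N) > 4"
  proof -
    have "Dl d (\<Phi> ^^ N) = (\<Sum>u<5^N. cw 5 (wt e) N u * dl (kw d 5 (kap d al be) N u))"
      by (rule Dl_wk[OF d kw_carrier5]) (simp add: \<Phi>_def wk_pow)
    also have "\<dots> \<ge> 4 * (1 - e)^N + 6 * real N * e * (1 - e)^(N - 1)"
      by (rule lower[OF d N e0 e1 al_def be_def])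
    finally show ?thesis using final_ineq[OF N e_def] by linarith
  qed
  from MU[unfolded mixed_unitary_def] show False
  proof (elim exE conjE)
    fix l :: nat and lam :: "nat \<Rightarrow> real" and U :: "nat \<Rightarrow> complex mat"
    assume lamU: "\<forall>j<l. 0 \<le> lam j \<and> unitary_mat d (U j)" and lam1: "sum lam {..<l} = 1"
      and rep: "\<forall>X\<in>carrier_mat d d. (\<Phi> ^^ N) X = mat d d (\<lambda>(a, b). \<Sum>j<l. complex_of_real (lam j) * (cadj (U j) * X * U j) $$ (a, b))"
    have Uc: "\<And>j. j < l \<Longrightarrow> U j \<in> carrier_mat d d" using lamU by (auto simp: unitary_mat_def)
    have "Dl d (\<Phi> ^^ N) = (\<Sum>j<l. lam j * dl (U j))"
      by (rule Dl_wk[OF d Uc]) (use rep in \<open>auto simp: wk_def\<close>)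
    also have "\<dots> \<le> (\<Sum>j<l. lam j * 4)"
      using lamU KL[OF _ d] by (intro sum_mono mult_left_mono) auto
    also have "\<dots> = 4" using lam1 by (simp add: sum_distrib_right[symmetric])
    finally show False using low by simp
  qed
qed


end
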